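(* Let $d\ge1$, $\alpha\in(0,2)$, $\beta\in(0,1)$, let $l$ be the maximal integer strictly less than $\alpha$, and let $\psi_\alpha(x,p)=|p|^\alpha w_\mu(x,p/|p|)$, $w_\mu(x,p)=\int_{\mathbb S^{d-1}}|(p,s)|^\alpha\mu(x,ds)$, where $\mu(x,\cdot)$ has a density bounded below by some $\mu_0>0$, $w_\mu$ is $\gamma$-Hölder in $x$ with values in a compact subset of $(0,\infty)$, and $w_\mu$ is $q$-times differentiable in $x$ with each of these derivatives $(d+1+(l+q)(\alpha+1))$-times continuously differentiable in $p$, all bounds uniform in $x,p$. Let $G_{\psi_\alpha,x}$ be the Green's function of $\partial_su=-\psi_\alpha(x,-i\nabla)u$, $G^{(\beta)}_{\psi_\alpha,x}(t,x,y)=\frac1\beta\int_0^\infty G_{\psi_\alpha,x}(t^\beta z,x,y)z^{-1-1/\beta}w_\beta(z^{-1/\beta})dz$, and $\Omega=|x-y|^\alpha t^{-\beta}$. Then there is $C>0$ such that for all $k\le l$, all indices $i_1,\dots,i_k$, and all $(t,x,y)\in(0,1)\times\mathbb R^d\times\mathbb R^d$, writing $D^k=\frac{\partial^k}{\partial x_{i_1}\cdots\partial x_{i_k}}$: (i) if $\Omega\le1$: $|D^kG^{(\beta)}_{\psi_\alpha,x}(t,x,y)|\le C t^{-(d+k)\beta/\alpha}$ if $d+k<\alpha$, $\le Ct^{-\beta}(|\log\Omega|+1)$ if $d+k=\alpha$, $\le Ct^{-(d+k)\beta/\alpha}\Omega^{1-(d+k)/\alpha}$ if $d+k>\alpha$;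 (ii) if $1\le\Omega\le t^{-\beta}$: $|D^kG^{(\beta)}_{\psi_\alpha,x}(t,x,y)|\le Ct^{-(d+k)\beta/\alpha}\Omega^{-1-(d+k)/\alpha}$; (iii) if $\Omega\ge t^{-\beta}$: $|D^kG^{(\beta)}_{\psi_\alpha,x}(t,x,y)|\le Ct^{-d\beta/\alpha}\Omega^{-1-d/\alpha}$.
   Context: For $\beta\in(0,1)$, $w_\beta$ denotes the probability density on $(0,\infty)$ of the totally positively skewed normalised $\beta$-stable law, i.e. $\int_0^\infty e^{-\lambda x}w_\beta(x)\,dx=e^{-\lambda^\beta}$. $G^{(\beta)}_{\psi_\alpha,x}$ is the Green's function of $D^\beta_0u=-\psi_\alpha(x,-i\nabla)u$ with $D^\beta_0$ the Caputo derivative of order $\beta$ in time. Known facts used as input: for each $T_0>0$ and $k\le l$, $|D^kG_{\psi_\alpha,x}(s,x,y)|\le C\min(s|x-y|^{-d-k-\alpha},s^{-(d+k)/\alpha})$ for $s\in(0,T_0)$, and $|D^kG_{\psi_\alpha,x}(s,x,y)|\le e^{Cs}\max(s^{-k/\alpha},1)\min(s|x-y|^{-d-\alpha},s^{-d/\alpha})$ for all $s>0$. *)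

theory Defs
  imports "HOL-Analysis.Analysis"
begin

definition pdiff :: "'n::finite \<Rightarrow> (real^'n \<Rightarrow> real) \<Rightarrow> real^'n \<Rightarrow> real" where
  "pdiff i f x = deriv (\<lambda>h. f (x + h *\<^sub>R axis i 1)) 0"

fun Dk :: "'n::finite list \<Rightarrow> (real^'n \<Rightarrow> real) \<Rightarrow> real^'n \<Rightarrow> real" where
  "Dk [] f = f"
| "Dk (i # is) f = pdiff i (Dk is f)"

text \<open>w is the density on (0,infinity) of the totally positively skewed normalised beta-stable law:
  a probability density whose Laplace transform is exp(-lambda^beta).\<close>
definition stable_density :: "real \<Rightarrow> (real \<Rightarrow> real) \<Rightarrow> bool" where
  "stable_density \<beta> w \<longleftrightarrow>
     w \<in> borel_measurable borel \<and> (\<forall>x>0. 0 \<le> w x) \<and>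
     set_integrable lborel {0<..} w \<and>
     (\<forall>r\<ge>0. (LINT x:{0<..}|lborel. exp (- r * x) * w x) = exp (- (r powr \<beta>)))"

definition Gbeta ::
  "(real \<Rightarrow> real^'n \<Rightarrow> real^'n \<Rightarrow> real) \<Rightarrow> (real \<Rightarrow> real) \<Rightarrow> real \<Rightarrow> real \<Rightarrow> real^'n \<Rightarrow> real^'n \<Rightarrow> real"
  where
  "Gbeta G w \<beta> t x y = (1 / \<beta>) *
     (LINT z:{0<..}|lborel. G (t powr \<beta> * z) x y * z powr (-1 - 1/\<beta>) * w (z powr (-1/\<beta>)))"

end

theory Submission
  imports Defs
begin

definition EW :: "(real \<Rightarrow> real) \<Rightarrow> (real \<Rightarrow> real) \<Rightarrow> real" where
  "EW w f = (LINT u:{0<..}|lborel. f u * w u)"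
definition IW :: "(real \<Rightarrow> real) \<Rightarrow> (real \<Rightarrow> real) \<Rightarrow> bool" where
  "IW w f \<longleftrightarrow> set_integrable lborel {0<..} (\<lambda>u. f u * w u)"

locale sd =
  fixes \<beta> :: real and w :: "real \<Rightarrow> real"
  assumes sd: "stable_density \<beta> w" and b0: "0 < \<beta>" and b1: "\<beta> < 1"
begin

lemma w_meas[measurable]: "w \<in> borel_measurable borel"
  using sd by (simp add: stable_density_def)
lemma w_nn: "u > 0 \<Longrightarrow> 0 \<le> w u"
  using sd by (simp add: stable_density_def)
lemma w_int: "set_integrable lborel {0<..} w"
  using sd by (simp add: stable_density_def)
lemma w_lap: "r \<ge> 0 \<Longrightarrow> (LINT x:{0<..}|lborel. exp (- r * x) * w x) = exp (- (r powr \<beta>))"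
  using sd by (simp add: stable_density_def)

lemma IW_dom:
  assumes "IW w g" "(\<lambda>u. indicator {0<..} u * f u) \<in> borel_measurable borel"
    "\<And>u. u > 0 \<Longrightarrow> \<bar>f u\<bar> \<le> g u"
  shows "IW w f"
  unfolding IW_def
proof (rule set_integrable_bound[OF assms(1)[unfolded IW_def]])
  have "(\<lambda>u. indicator {0<..} u * f u * w u) \<in> borel_measurable borel"
    using assms(2) by measurable
  then show "set_borel_measurable lborel {0<..} (\<lambda>u. f u * w u)"
    unfolding set_borel_measurable_def by (simp add: mult.assoc)
  show "AE x in lborel. x \<in> {0<..} \<longrightarrow> norm (f x * w x) \<le> norm (g x * w x)"
  proof (intro AE_I2 impI)
    fix x :: real assume "x \<in> {0<..}"
    then have "\<bar>f x\<bar> \<le> \<bar>g x\<bar>" "0 \<le> w x" using assms(3) w_nn by force+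
    then show "norm (f x * w x) \<le> norm (g x * w x)"
      by (simp add: abs_mult mult_right_mono)
  qed
qed

lemma EW_mono:
  assumes "IW w f" "IW w g" "\<And>u. u > 0 \<Longrightarrow> f u \<le> g u"
  shows "EW w f \<le> EW w g"
  unfolding EW_def using assms unfolding IW_def
  by (intro set_integral_mono) (auto intro!: mult_right_mono w_nn)

lemma EW_nonneg:
  assumes "\<And>u. u > 0 \<Longrightarrow> 0 \<le> f u"
  shows "0 \<le> EW w f"
  unfolding EW_def set_lebesgue_integral_def
  by (rule integral_nonneg_AE) (auto simp: assms w_nn indicator_def)

lemma EW_bound:
  assumes "IW w g" "\<And>u. u > 0 \<Longrightarrow> \<bar>f u\<bar> \<le> g u"
  shows "\<bar>EW w f\<bar> \<le> EW w g"
proof (cases "IW w f")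
  case True
  have "\<bar>EW w f\<bar> \<le> (LINT u:{0<..}|lborel. norm (f u * w u))"
    unfolding EW_def using True[unfolded IW_def] set_integral_norm_bound by (metis real_norm_def)
  also have "\<dots> \<le> EW w g" unfolding EW_def
    using True assms set_integrable_abs[OF True[unfolded IW_def]] unfolding IW_def
    by (intro set_integral_mono) (auto simp: abs_mult w_nn intro!: mult_right_mono)
  finally show ?thesis .
next
  case False
  then have "EW w f = 0" unfolding EW_def IW_def set_integrable_def set_lebesgue_integral_def
    by (simp add: not_integrable_integral_eq)
  moreover have "0 \<le> EW w g" using assms(2) by (intro EW_nonneg) (metis abs_ge_zero order_trans)
  ultimately show ?thesis by simp
qed

lemma EW_add:
  assumes "IW w f" "IW w g"
  shows "IW w (\<lambda>u. f u + g u)" "EW w (\<lambda>u. f u + g u) = EW w f + EW w g"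
  using assms unfolding IW_def EW_def by (simp_all add: distrib_right)

lemma EW_cmult:
  assumes "IW w f"
  shows "IW w (\<lambda>u. c * f u)" "EW w (\<lambda>u. c * f u) = c * EW w f"
  using assms unfolding IW_def EW_def by (simp_all add: mult.assoc)

lemma IW_iff: "IW w f \<longleftrightarrow> integrable lborel (\<lambda>u. indicator {0<..} u * (f u * w u))"
  unfolding IW_def set_integrable_def by simp
lemma EW_eq: "EW w f = integral\<^sup>L lborel (\<lambda>u. indicator {0<..} u * (f u * w u))"
  unfolding EW_def set_lebesgue_integral_def by simp

lemma EW_suminf:
  fixes g :: "nat \<Rightarrow> real \<Rightarrow> real" and b :: "nat \<Rightarrow> real"
  assumes meas: "(\<lambda>u. indicator {0<..} u * f u) \<in> borel_measurable borel"
    and nn: "\<And>u. u > 0 \<Longrightarrow> 0 \<le> f u"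
    and gI: "\<And>n. IW w (g n)" and gnn: "\<And>n u. u > 0 \<Longrightarrow> 0 \<le> g n u"
    and gb: "\<And>n. EW w (g n) \<le> b n" and sb: "summable b"
    and pt: "\<And>u. u > 0 \<Longrightarrow> ennreal (f u) \<le> (\<Sum>n. ennreal (g n u))"
  shows "IW w f \<and> EW w f \<le> (\<Sum>n. b n)"
proof -
  define F where "F u = indicator {0<..} u * (f u * w u)" for u :: real
  define Gn where "Gn n u = indicator {0<..} u * (g n u * w u)" for n and u :: real
  have Fm: "F \<in> borel_measurable borel" unfolding F_def
    using meas by (simp add: mult.assoc[symmetric])
  have Fnn: "0 \<le> F u" for u unfolding F_def using nn w_nn by (auto simp: indicator_def)
  have Gnn: "0 \<le> Gn n u" for n u unfolding Gn_def using gnn w_nn by (auto simp: indicator_def)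
  have GI: "integrable lborel (Gn n)" for n using gI[of n] unfolding IW_iff Gn_def by simp
  have Gm: "Gn n \<in> borel_measurable borel" for n using borel_measurable_integrable[OF GI[of n]] by simp
  have b0: "0 \<le> b n" for n
    using gb[of n] EW_nonneg[of "g n"] gnn by force
  have "(\<integral>\<^sup>+u. ennreal (F u) \<partial>lborel) \<le> (\<integral>\<^sup>+u. (\<Sum>n. ennreal (Gn n u)) \<partial>lborel)"
  proof (intro nn_integral_mono)
    fix u :: real
    show "ennreal (F u) \<le> (\<Sum>n. ennreal (Gn n u))"
    proof (cases "u > 0")
      case True
      have "ennreal (F u) = ennreal (f u) * ennreal (w u)"
        using True nn w_nn by (simp add: F_def ennreal_mult)
      also have "\<dots> \<le> (\<Sum>n. ennreal (g n u)) * ennreal (w u)"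
        by (intro mult_right_mono pt True) simp
      also have "\<dots> = (\<Sum>n. ennreal (Gn n u))"
        using True gnn w_nn by (simp add: Gn_def ennreal_mult mult.commute)
      finally show ?thesis .
    next
      case False then show ?thesis by (simp add: F_def)
    qed
  qed
  also have "\<dots> = (\<Sum>n. \<integral>\<^sup>+u. ennreal (Gn n u) \<partial>lborel)"
    by (rule nn_integral_suminf) (use Gm in simp)
  also have "\<dots> = (\<Sum>n. ennreal (EW w (g n)))"
  proof -
    have "\<And>n. (\<integral>\<^sup>+u. ennreal (Gn n u) \<partial>lborel) = ennreal (EW w (g n))"
      using nn_integral_eq_integral[OF GI] Gnn by (simp add: EW_eq Gn_def[abs_def])
    then show ?thesis by simp
  qed
  also have "\<dots> \<le> (\<Sum>n. ennreal (b n))"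
    by (intro suminf_le) (auto simp: gb ennreal_leI)
  also have "\<dots> = ennreal (\<Sum>n. b n)" using suminf_ennreal2[OF b0 sb] .
  finally have le: "(\<integral>\<^sup>+u. ennreal (F u) \<partial>lborel) \<le> ennreal (\<Sum>n. b n)" .
  have FI: "integrable lborel F"
    by (rule integrableI_nonneg) (use Fm Fnn le in \<open>auto simp: top.not_eq_extremum intro: le_less_trans\<close>)
  have "ennreal (integral\<^sup>L lborel F) \<le> ennreal (\<Sum>n. b n)"
    using le nn_integral_eq_integral[OF FI] Fnn by simp
  then have "integral\<^sup>L lborel F \<le> (\<Sum>n. b n)"
    using suminf_nonneg[OF sb b0] by (simp add: ennreal_le_iff)
  then show ?thesis using FI unfolding IW_iff EW_eq F_def by simp
qed

lemma IW_one: "IW w (\<lambda>_. 1)" and EW_one: "EW w (\<lambda>_. 1) = 1"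
proof -
  show "IW w (\<lambda>_. 1)" using w_int unfolding IW_def by simp
  show "EW w (\<lambda>_. 1) = 1" using w_lap[of 0] unfolding EW_def by simp
qed

lemma lap: assumes "r \<ge> 0"
  shows "IW w (\<lambda>u. exp (- r * u))" "EW w (\<lambda>u. exp (- r * u)) = exp (- (r powr \<beta>))"
proof -
  show "IW w (\<lambda>u. exp (- r * u))"
    by (rule IW_dom[OF IW_one]) (use assms in \<open>auto simp: mult_nonneg_nonneg\<close>)
  show "EW w (\<lambda>u. exp (- r * u)) = exp (- (r powr \<beta>))"
    using w_lap[OF assms] unfolding EW_def .
qed

definition "c0 = 1 / (1 - exp (-1::real))"
lemma c0_pos: "c0 > 0" unfolding c0_def by simp

lemma tail: assumes "a > 0"
  shows "IW w (indicator {a..})" "EW w (indicator {a..}) \<le> c0 * a powr (- \<beta>)"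
proof -
  define g where "g u = c0 * 1 + (- c0) * exp (- (1/a) * u)" for u
  have gI: "IW w g" unfolding g_def
    by (intro EW_add EW_cmult IW_one lap) (use assms in simp)
  have l1: "IW w (\<lambda>u. c0 * 1)" "IW w (\<lambda>u. (- c0) * exp (- (1/a) * u))"
    by (rule EW_cmult(1)[OF IW_one], rule EW_cmult(1)[OF lap(1)]) (use assms in simp)
  have gE: "EW w g = c0 * (1 - exp (- ((1/a) powr \<beta>)))"
  proof -
    have B: "EW w (\<lambda>u. c0*1) = c0" using EW_cmult(2)[OF IW_one, of c0] EW_one by simp
    have C: "EW w (\<lambda>u. (-c0) * exp (- (1/a) * u)) = (-c0) * exp (- ((1/a) powr \<beta>))"
      using EW_cmult(2)[OF lap(1), of "1/a" "-c0"] lap(2)[of "1/a"] assms by simp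
    have "EW w g = c0 + (-c0) * exp (- ((1/a) powr \<beta>))"
      unfolding g_def EW_add(2)[OF l1] B C by simp
    then show ?thesis by (simp add: algebra_simps)
  qed
  have pt: "\<bar>indicator {a..} u\<bar> \<le> g u" if "u > 0" for u :: real
  proof (cases "u \<ge> a")
    case True
    then have "exp (- (1/a) * u) \<le> exp (-1)" using assms by (simp add: field_simps)
    then show ?thesis using True unfolding g_def c0_def by (simp add: field_simps)
  next
    case False
    have "exp (- (1/a) * u) \<le> 1" using assms that by simp
    then show ?thesis using False c0_pos unfolding g_def by (simp add: algebra_simps)
  qed
  show "IW w (indicator {a..})" by (rule IW_dom[OF gI _ pt]) simp_all
  have "EW w (indicator {a..}) \<le> \<bar>EW w (indicator {a..})\<bar>" by simp
  also have "\<dots> \<le> EW w g" by (rule EW_bound[OF gI pt])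
  also have "\<dots> \<le> c0 * (1/a) powr \<beta>" unfolding gE
    using exp_ge_add_one_self[of "- ((1/a) powr \<beta>)"] c0_pos by (intro mult_left_mono) auto
  also have "(1/a) powr \<beta> = a powr (- \<beta>)" using assms by (simp add: powr_minus_divide powr_divide)
  finally show "EW w (indicator {a..}) \<le> c0 * a powr (- \<beta>)" .
qed

lemma ennr_le_suminf: "x \<le> g n \<Longrightarrow> ennreal x \<le> (\<Sum>n. ennreal (g n))"
proof -
  assume "x \<le> g n"
  then have "ennreal x \<le> ennreal (g n)" by (rule ennreal_leI)
  also have "\<dots> = (\<Sum>m\<in>{n}. ennreal (g m))" by simp
  also have "\<dots> \<le> (\<Sum>m. ennreal (g m))" by (rule sum_le_suminf) auto
  finally show ?thesis .
qed

lemma dyadic: assumes "(1::real) \<le> v" shows "\<exists>n::nat. 2^n \<le> v \<and> v < 2^(Suc n)"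
proof -
  obtain N where N: "v < 2^N" using real_arch_pow[of 2 v] by auto
  define n0 where "n0 = (LEAST n. v < (2::real)^n)"
  have n0: "v < 2^n0" unfolding n0_def by (rule LeastI[of "\<lambda>n. v < (2::real)^n", OF N])
  have "n0 \<noteq> 0" proof assume "n0 = 0" then show False using n0 assms by simp qed
  then obtain n where n: "n0 = Suc n" by (cases n0) auto
  have "\<not> v < 2^n" using not_less_Least[of n "\<lambda>n. v < (2::real)^n"] n unfolding n0_def by simp
  then show ?thesis using n0 n by (intro exI[of _ n]) auto
qed

lemma expmom: assumes c: "c \<ge> 0" shows "IW w (\<lambda>u. exp (c * u powr (- \<beta>)))"
proof -
  define m where "m = (c * 2 powr \<beta> + 1) powr (1/\<beta>)"
  have cp: "c * 2 powr \<beta> + 1 > 0" using c by (simp add: add_nonneg_pos)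
  have m0: "m > 0" unfolding m_def using cp by simp
  have mb: "m powr \<beta> = c * 2 powr \<beta> + 1" unfolding m_def using cp b0
    by (simp add: powr_powr)
  define g where "g n u = (if n = 0 then exp c else
      exp m * exp (c * 2 powr (real n * \<beta>)) * exp (- (m * 2^(n-1)) * u))" for n u
  define b where "b n = (if n = 0 then exp c else exp m * exp (- (2 powr (real (n-1) * \<beta>))))" for n
  define h where "h = 2 powr \<beta> - 1"
  have h0: "h > 0" unfolding h_def using b0 by simp
  have gI: "IW w (g n)" for n
  proof (cases n)
    case 0 then show ?thesis unfolding g_def using EW_cmult(1)[OF IW_one, of "exp c"] by simp
  next
    case (Suc k)
    have "IW w (\<lambda>u. (exp m * exp (c * 2 powr (real n * \<beta>))) * exp (- (m * 2^k) * u))"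
      by (rule EW_cmult(1)[OF lap(1)]) (use m0 in simp)
    then show ?thesis unfolding g_def using Suc by (simp add: mult.assoc)
  qed
  have gnn: "0 \<le> g n u" for n u unfolding g_def by simp
  have gb: "EW w (g n) \<le> b n" for n
  proof (cases n)
    case 0 then show ?thesis unfolding g_def b_def using EW_cmult(2)[OF IW_one, of "exp c"] EW_one by simp
  next
    case (Suc k)
    have "EW w (g n) = EW w (\<lambda>u. (exp m * exp (c * 2 powr (real n * \<beta>))) * exp (- (m * 2^k) * u))"
      unfolding g_def using Suc by (simp add: mult.assoc)
    also have "\<dots> = exp m * exp (c * 2 powr (real n * \<beta>)) * exp (- ((m * 2^k) powr \<beta>))"
      using EW_cmult(2)[OF lap(1)] lap(2) m0 by simp
    also have "(m * 2^k) powr \<beta> = (c * 2 powr \<beta> + 1) * 2 powr (real k * \<beta>)"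
      using m0 by (simp add: powr_mult mb powr_realpow[symmetric] powr_powr mult.commute)
    also have "c * 2 powr (real n * \<beta>) = c * 2 powr \<beta> * 2 powr (real k * \<beta>)"
      using Suc by (simp add: powr_add[symmetric] algebra_simps)
    also have "exp m * exp (c * 2 powr \<beta> * 2 powr (real k * \<beta>)) *
        exp (- ((c * 2 powr \<beta> + 1) * 2 powr (real k * \<beta>))) = b n"
      unfolding b_def using Suc by (simp add: exp_add[symmetric] algebra_simps)
    finally show ?thesis by simp
  qed
  have sb: "summable b"
  proof -
    have "summable (\<lambda>k. exp m * exp (- h) ^ k)" by (intro summable_mult summable_geometric) (use h0 in simp)
    moreover have "norm (b (Suc k)) \<le> exp m * exp (- h) ^ k" for k
    proof -
      have "1 + real k * h \<le> (1 + h) ^ k" by (rule Bernoulli_inequality) (use h0 in simp)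
      also have "(1 + h) ^ k = 2 powr (real k * \<beta>)" unfolding h_def
        by (simp add: powr_realpow[symmetric] powr_powr mult.commute)
      finally have "real k * h \<le> 2 powr (real k * \<beta>)" by simp
      then have "exp (- (2 powr (real k * \<beta>))) \<le> exp (- h) ^ k"
        by (simp add: exp_of_nat_mult[symmetric] mult.commute)
      then show ?thesis unfolding b_def by simp
    qed
    ultimately have "summable (\<lambda>k. b (Suc k))" by (rule summable_comparison_test'[where N=0])
    then show ?thesis by (simp add: summable_Suc_iff)
  qed
  have pt: "ennreal (exp (c * u powr (- \<beta>))) \<le> (\<Sum>n. ennreal (g n u))" if u: "u > 0" for u
  proof (cases "u \<ge> 1")
    case True
    have "u powr (- \<beta>) \<le> 1" using True b0 by (simp add: powr_minus_divide ge_one_powr_ge_zero)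
    then have "exp (c * u powr (- \<beta>)) \<le> g 0 u" unfolding g_def using c
      by (simp add: mult_left_le)
    then show ?thesis by (rule ennr_le_suminf)
  next
    case False
    then have "1 \<le> 1/u" using u by simp
    from dyadic[OF this] obtain k :: nat where k: "2^k \<le> 1/u" "1/u < 2^Suc k" by blast
    have "u powr (- \<beta>) = (1/u) powr \<beta>" using u by (simp add: powr_minus_divide powr_divide)
    also have "\<dots> \<le> (2^Suc k) powr \<beta>" using k u b0 by (intro powr_mono2) auto
    also have "\<dots> = 2 powr (real (Suc k) * \<beta>)"
    proof -
      have "(2::real)^Suc k = 2 powr real (Suc k)" by (simp only: powr_realpow zero_less_numeral)
      then show ?thesis by (simp only: powr_powr)
    qed
    finally have e1: "exp (c * u powr (- \<beta>)) \<le> exp (c * 2 powr (real (Suc k) * \<beta>))"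
      using c by (simp add: mult_left_mono)
    have "2^k * u \<le> 1" using k(1) u by (simp add: pos_le_divide_eq)
    then have "m * 2^k * u \<le> m" using m0 by (simp add: mult.assoc mult_left_le)
    then have "exp m * exp (- (m * 2^k) * u) \<ge> 1"
      by (simp add: exp_add[symmetric] mult.assoc)
    then have "exp (c * 2 powr (real (Suc k) * \<beta>)) \<le> g (Suc k) u" unfolding g_def
      by (simp add: mult.commute mult.left_commute mult_le_cancel_left1)
    with e1 show ?thesis by (intro ennr_le_suminf) (rule order_trans)
  qed
  show ?thesis
    using EW_suminf[of "\<lambda>u. exp (c * u powr (- \<beta>))" g b, OF _ _ gI gnn gb sb pt] by auto
qed

lemma negexpmom: assumes c: "c \<ge> 0"
  shows "IW w (\<lambda>u. exp (c * u powr (- \<beta>)) * u powr (- \<beta>))"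
proof (rule IW_dom[OF expmom[of "c+1"]])
  show "0 \<le> c + 1" using c by simp
  show "(\<lambda>u. indicator {0<..} u * (exp (c * u powr - \<beta>) * u powr - \<beta>)) \<in> borel_measurable borel"
    by measurable
  fix u :: real assume "u > 0"
  have "u powr (- \<beta>) \<le> exp (u powr (- \<beta>))" using exp_ge_add_one_self[of "u powr (- \<beta>)"] by linarith
  then have "exp (c * u powr - \<beta>) * u powr - \<beta> \<le> exp (c * u powr - \<beta>) * exp (u powr (- \<beta>))"
    by (intro mult_left_mono) auto
  also have "\<dots> = exp ((c + 1) * u powr - \<beta>)" by (simp add: exp_add[symmetric] algebra_simps)
  finally show "\<bar>exp (c * u powr - \<beta>) * u powr - \<beta>\<bar> \<le> exp ((c + 1) * u powr - \<beta>)" by simp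
qed

lemma negmom: "IW w (\<lambda>u. u powr (- \<beta>))"
  using negexpmom[of 0] by simp

lemma negtail: assumes a: "a > 0"
  shows "IW w (\<lambda>u. u powr (- \<beta>) * indicator {a..} u)"
    "EW w (\<lambda>u. u powr (- \<beta>) * indicator {a..} u) \<le> c0 * a powr (- 2 * \<beta>)"
proof -
  have I: "IW w (\<lambda>u. a powr (- \<beta>) * indicator {a..} u)" by (rule EW_cmult(1)[OF tail(1)[OF a]])
  have pt: "\<bar>u powr (- \<beta>) * indicator {a..} u\<bar> \<le> a powr (- \<beta>) * indicator {a..} u" if "u > 0" for u
  proof (cases "u \<ge> a")
    case True then show ?thesis using a b0 by (simp add: powr_mono2')
  qed simp
  show "IW w (\<lambda>u. u powr (- \<beta>) * indicator {a..} u)"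
    by (rule IW_dom[OF I _ pt]) measurable
  have "EW w (\<lambda>u. u powr (- \<beta>) * indicator {a..} u) \<le> EW w (\<lambda>u. a powr (- \<beta>) * indicator {a..} u)"
    using EW_bound[OF I pt] by simp
  also have "\<dots> = a powr (- \<beta>) * EW w (indicator {a..})"
    using EW_cmult(2)[OF tail(1)[OF a]] by simp
  also have "\<dots> \<le> a powr (- \<beta>) * (c0 * a powr (- \<beta>))"
    by (intro mult_left_mono tail(2)[OF a]) simp
  also have "\<dots> = c0 * a powr (- 2 * \<beta>)" by (simp add: powr_add[symmetric])
  finally show "EW w (\<lambda>u. u powr (- \<beta>) * indicator {a..} u) \<le> c0 * a powr (- 2 * \<beta>)" .
qed

lemma dy_mom:
  fixes P :: "nat \<Rightarrow> bool"
  assumes q: "q > 0"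
    and meas: "(\<lambda>u. indicator {0<..} u * f u) \<in> borel_measurable borel"
    and fb: "\<And>u. u > 0 \<Longrightarrow> 0 \<le> f u \<and> f u \<le> u powr q"
    and Q: "\<And>u j. u \<ge> 1 \<Longrightarrow> f u \<noteq> 0 \<Longrightarrow> 2^j \<le> u \<Longrightarrow> P j"
    and sm: "summable (\<lambda>j. if P j then 2 powr (real (Suc j) * q) * 2 powr (- real j * \<beta>) else 0)"
  shows "IW w f \<and> EW w f \<le> 1 + c0 * (\<Sum>j. if P j then 2 powr (real (Suc j) * q) * 2 powr (- real j * \<beta>) else 0)"
proof -
  define a where "a j = (if P j then 2 powr (real (Suc j) * q) * 2 powr (- real j * \<beta>) else 0)" for j
  define g where "g n u = (if n = 0 then 1 else if P (n-1) then 2 powr (real n * q) * indicator {2^(n-1)..} u else 0)" for n and u :: real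
  define b where "b n = (if n = 0 then 1 else c0 * a (n-1))" for n
  have gI: "IW w (g n)" for n
  proof (cases n)
    case 0 then show ?thesis unfolding g_def by (simp add: IW_one)
  next
    case (Suc k)
    have "IW w (\<lambda>u. 2 powr (real n * q) * indicator {2^k..} u)"
      by (rule EW_cmult(1)[OF tail(1)]) simp
    moreover have "IW w (\<lambda>u. 0)" using EW_cmult(1)[OF IW_one, of 0] by simp
    ultimately show ?thesis unfolding g_def using Suc by (cases "P k") simp_all
  qed
  have gnn: "0 \<le> g n u" for n u unfolding g_def by simp
  have gb: "EW w (g n) \<le> b n" for n
  proof (cases n)
    case 0 then show ?thesis unfolding g_def b_def by (simp add: EW_one)
  next
    case (Suc k)
    show ?thesis
    proof (cases "P k")
      case True
      have "EW w (g n) = 2 powr (real n * q) * EW w (indicator {2^k..})"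
        unfolding g_def using Suc True EW_cmult(2)[OF tail(1), of "2^k" "2 powr (real n * q)"] by simp
      also have "\<dots> \<le> 2 powr (real n * q) * (c0 * (2^k) powr (- \<beta>))"
        by (intro mult_left_mono tail(2)) simp_all
      also have "(2::real)^k = 2 powr real k" by (simp only: powr_realpow zero_less_numeral)
      also have "2 powr (real n * q) * (c0 * (2 powr real k) powr (- \<beta>)) = b n"
        unfolding b_def a_def using Suc True by (simp add: powr_powr)
      finally show ?thesis .
    next
      case False
      have "EW w (\<lambda>u. 0) = 0" using EW_cmult(2)[OF IW_one, of 0] by simp
      then show ?thesis unfolding g_def b_def a_def using Suc False by simp
    qed
  qed
  have sa: "summable a" using sm unfolding a_def .
  have sb: "summable b"
  proof -
    have "summable (\<lambda>n. b (Suc n))" unfolding b_def using summable_mult[OF sa, of c0] by simp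
    then show ?thesis by (simp add: summable_Suc_iff)
  qed
  have pt: "ennreal (f u) \<le> (\<Sum>n. ennreal (g n u))" if u: "u > 0" for u
  proof (cases "u \<ge> 1 \<and> f u \<noteq> 0")
    case False
    have "f u \<le> 1"
    proof (cases "1 \<le> u")
      case True then show ?thesis using False by simp
    next
      case F2: False
      then have "u powr q \<le> 1" using u q powr_mono2[of q u 1] by simp
      then show ?thesis using fb[OF u] by simp
    qed
    then show ?thesis by (intro ennr_le_suminf[of _ "\<lambda>n. g n u" 0]) (simp add: g_def)
  next
    case True
    from dyadic[of u] True obtain k :: nat where k: "2^k \<le> u" "u < 2^Suc k" by blast
    have Pk: "P k" using Q[of u k] True k by simp
    have "u powr q \<le> (2^Suc k) powr q" using k u q by (intro powr_mono2) auto
    also have "(2::real)^Suc k = 2 powr real (Suc k)" by (simp only: powr_realpow zero_less_numeral)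
    also have "(2 powr real (Suc k)) powr q = g (Suc k) u" unfolding g_def using Pk k
      by (simp add: powr_powr)
    finally show ?thesis using fb[OF u] by (intro ennr_le_suminf[of _ "\<lambda>n. g n u" "Suc k"]) simp
  qed
  have "IW w f \<and> EW w f \<le> (\<Sum>n. b n)"
    by (rule EW_suminf[OF meas _ gI gnn gb sb pt]) (use fb in auto)
  moreover have "(\<Sum>n. b n) = 1 + c0 * (\<Sum>j. a j)"
    using suminf_split_head[OF sb] suminf_mult[OF sa, of c0] unfolding b_def by simp
  ultimately show ?thesis unfolding a_def by simp
qed

lemma aj_eq: "2 powr (real (Suc j) * q) * 2 powr (- real j * \<beta>) = 2 powr q * (2 powr (q - \<beta>)) ^ j"
proof -
  have "(2 powr (q - \<beta>)) ^ j = 2 powr ((q - \<beta>) * real j)"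
    by (simp add: powr_realpow[symmetric] powr_powr)
  then show ?thesis by (simp add: powr_add[symmetric] algebra_simps)
qed

lemma lowmom: assumes q: "0 < q" "q < \<beta>"
  shows "IW w (\<lambda>u. u powr q)" "EW w (\<lambda>u. u powr q) \<le> 1 + c0 * (2 powr q / (1 - 2 powr (q - \<beta>)))"
proof -
  define r where "r = 2 powr (q - \<beta>)"
  have r: "0 < r" "r < 1" unfolding r_def using q powr_less_mono[of "q-\<beta>" 0 2] by auto
  have eq: "(\<lambda>j. if True then 2 powr (real (Suc j) * q) * 2 powr (- real j * \<beta>) else 0) =
      (\<lambda>j. 2 powr q * r ^ j)" unfolding r_def by (intro ext) (simp only: aj_eq if_True)
  have sm: "summable (\<lambda>j. 2 powr q * r ^ j)" using r by (intro summable_mult summable_geometric) simp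
  have "IW w (\<lambda>u. u powr q) \<and> EW w (\<lambda>u. u powr q) \<le> 1 + c0 * (\<Sum>j. 2 powr q * r ^ j)"
    using dy_mom[of q "\<lambda>u. u powr q" "\<lambda>_. True"] q sm unfolding eq by (simp add: measurable_ident)
  moreover have "(\<Sum>j. 2 powr q * r ^ j) = 2 powr q / (1 - r)"
    using suminf_mult[OF summable_geometric[of r], of "2 powr q"] suminf_geometric[of r] r by simp
  ultimately show "IW w (\<lambda>u. u powr q)" "EW w (\<lambda>u. u powr q) \<le> 1 + c0 * (2 powr q / (1 - 2 powr (q - \<beta>)))"
    unfolding r_def by auto
qed

lemma truncmom_J: assumes q: "0 < q"
  shows "IW w (\<lambda>u. u powr q * indicator {..<2^J} u)"
    "EW w (\<lambda>u. u powr q * indicator {..<2^J} u) \<le> 1 + c0 * (2 powr q * (\<Sum>j<J. (2 powr (q - \<beta>)) ^ j))"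
proof -
  define r where "r = 2 powr (q - \<beta>)"
  have eq: "(\<lambda>j. if j < J then 2 powr (real (Suc j) * q) * 2 powr (- real j * \<beta>) else 0) =
      (\<lambda>j. if j < J then 2 powr q * r ^ j else 0)" unfolding r_def by (intro ext) (simp only: aj_eq)
  have sm: "summable (\<lambda>j. if j < J then 2 powr q * r ^ j else 0)"
    by (rule summable_finite[of "{..<J}"]) auto
  have su: "(\<Sum>j. if j < J then 2 powr q * r ^ j else (0::real)) = 2 powr q * (\<Sum>j<J. r ^ j)"
    by (subst suminf_finite[of "{..<J}"]) (auto simp: sum_distrib_left)
  have Q: "j < J" if "2^j \<le> u" "u powr q * indicator {..<2^J} u \<noteq> 0" for u :: real and j
  proof -
    have "u < 2^J" using that(2) by (auto simp: indicator_def split: if_splits)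
    then have "(2::real)^j < 2^J" using that(1) by linarith
    then show ?thesis by simp
  qed
  have fb: "0 \<le> u powr q * indicator {..<2^J} u \<and> u powr q * indicator {..<2^J} u \<le> u powr q" for u :: real
    by (auto simp: indicator_def)
  have "IW w (\<lambda>u. u powr q * indicator {..<2^J} u) \<and>
      EW w (\<lambda>u. u powr q * indicator {..<2^J} u) \<le> 1 + c0 * (2 powr q * (\<Sum>j<J. r ^ j))"
    using dy_mom[of q "\<lambda>u. u powr q * indicator {..<2^J} u" "\<lambda>j. j < J", OF q _ fb Q] sm
    unfolding eq su by (simp add: measurable_ident)
  then show "IW w (\<lambda>u. u powr q * indicator {..<2^J} u)"
    "EW w (\<lambda>u. u powr q * indicator {..<2^J} u) \<le> 1 + c0 * (2 powr q * (\<Sum>j<J. (2 powr (q - \<beta>)) ^ j))"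
    unfolding r_def by auto
qed

lemma trunc_mono:
  assumes q: "0 < q" and a: "a \<le> b" and bI: "IW w (\<lambda>u. u powr q * indicator {..<b} u)"
  shows "IW w (\<lambda>u. u powr q * indicator {..<a} u)"
    "EW w (\<lambda>u. u powr q * indicator {..<a} u) \<le> EW w (\<lambda>u. u powr q * indicator {..<b} u)"
proof -
  have pt: "\<bar>u powr q * indicator {..<a} u\<bar> \<le> u powr q * indicator {..<b} u" for u :: real
    using a by (auto simp: indicator_def)
  show I: "IW w (\<lambda>u. u powr q * indicator {..<a} u)"
    by (rule IW_dom[OF bI _ pt]) measurable
  show "EW w (\<lambda>u. u powr q * indicator {..<a} u) \<le> EW w (\<lambda>u. u powr q * indicator {..<b} u)"
    using EW_bound[OF bI pt] by simp
qed

lemma trunc_dy: assumes a: "1 \<le> a"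
  obtains J :: nat where "a \<le> 2^J" "2^J \<le> 2 * a" "real J \<le> 1 + ln a / ln 2"
proof -
  from dyadic[OF a] obtain n :: nat where n: "2^n \<le> a" "a < 2^Suc n" by blast
  have "real n = log 2 (2^n)" by simp
  also have "\<dots> \<le> log 2 a" using n(1) a by (subst log_le_cancel_iff) auto
  finally have "real (Suc n) \<le> 1 + ln a / ln 2" by (simp add: log_def)
  then show ?thesis using n by (intro that[of "Suc n"]) auto
qed

definition "Kp q = 1 + c0 * (2 powr q * (2 powr (q - \<beta>) / (2 powr (q - \<beta>) - 1)))"
definition "Ke = 1 + c0 * 2 powr \<beta> + c0 * 2 powr \<beta> / ln 2"

lemma truncmom_pos: assumes q: "\<beta> < q" and a: "1 \<le> a"
  shows "IW w (\<lambda>u. u powr q * indicator {..<a} u)"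
    "EW w (\<lambda>u. u powr q * indicator {..<a} u) \<le> Kp q * a powr (q - \<beta>)"
proof -
  obtain J :: nat where J: "a \<le> 2^J" "2^J \<le> 2 * a" using trunc_dy[OF a] by blast
  have q0: "0 < q" using q b0 by simp
  define r where "r = 2 powr (q - \<beta>)"
  have r1: "1 < r" unfolding r_def using q by simp
  show "IW w (\<lambda>u. u powr q * indicator {..<a} u)"
    by (rule trunc_mono(1)[OF q0 J(1) truncmom_J(1)[OF q0]])
  have "EW w (\<lambda>u. u powr q * indicator {..<a} u) \<le> EW w (\<lambda>u. u powr q * indicator {..<2^J} u)"
    by (rule trunc_mono(2)[OF q0 J(1) truncmom_J(1)[OF q0]])
  also have "\<dots> \<le> 1 + c0 * (2 powr q * (\<Sum>j<J. r ^ j))" unfolding r_def by (rule truncmom_J(2)[OF q0])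
  also have "(\<Sum>j<J. r ^ j) = (r ^ J - 1) / (r - 1)" using r1 by (simp add: geometric_sum)
  also have "\<dots> \<le> r ^ J / (r - 1)" using r1 by (simp add: divide_right_mono)
  also have "r ^ J = (2 ^ J) powr (q - \<beta>)" unfolding r_def
    by (simp add: powr_realpow[symmetric] powr_powr mult.commute)
  also have "\<dots> \<le> (2 * a) powr (q - \<beta>)" using J q by (intro powr_mono2) auto
  also have "\<dots> = r * a powr (q - \<beta>)" unfolding r_def using a by (simp add: powr_mult)
  finally have le: "EW w (\<lambda>u. u powr q * indicator {..<a} u) \<le> 1 + c0 * (2 powr q * (r * a powr (q - \<beta>) / (r - 1)))"
    using c0_pos r1 by (simp add: mult_left_mono divide_right_mono)
  have ap: "1 \<le> a powr (q - \<beta>)" using a q by (simp add: ge_one_powr_ge_zero)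
  have "1 + c0 * (2 powr q * (r * a powr (q - \<beta>) / (r - 1))) \<le> a powr (q - \<beta>) + c0 * (2 powr q * (r / (r - 1))) * a powr (q - \<beta>)"
    using ap by simp
  also have "\<dots> = Kp q * a powr (q - \<beta>)" unfolding Kp_def r_def by (simp add: algebra_simps)
  finally show "EW w (\<lambda>u. u powr q * indicator {..<a} u) \<le> Kp q * a powr (q - \<beta>)" using le by linarith
qed

lemma truncmom_eq: assumes a: "1 \<le> a"
  shows "IW w (\<lambda>u. u powr \<beta> * indicator {..<a} u)"
    "EW w (\<lambda>u. u powr \<beta> * indicator {..<a} u) \<le> Ke * (1 + ln a)"
proof -
  obtain J :: nat where J: "a \<le> 2^J" "real J \<le> 1 + ln a / ln 2" using trunc_dy[OF a] by blast
  show "IW w (\<lambda>u. u powr \<beta> * indicator {..<a} u)"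
    by (rule trunc_mono(1)[OF b0 J(1) truncmom_J(1)[OF b0]])
  have "EW w (\<lambda>u. u powr \<beta> * indicator {..<a} u) \<le> EW w (\<lambda>u. u powr \<beta> * indicator {..<2^J} u)"
    by (rule trunc_mono(2)[OF b0 J(1) truncmom_J(1)[OF b0]])
  also have "\<dots> \<le> 1 + c0 * (2 powr \<beta> * real J)" using truncmom_J(2)[OF b0, of J] by simp
  also have "\<dots> \<le> 1 + c0 * (2 powr \<beta> * (1 + ln a / ln 2))"
    using J(2) c0_pos by (intro add_left_mono mult_left_mono) auto
  also have "\<dots> \<le> Ke * (1 + ln a)"
  proof -
    have l: "0 \<le> ln a" using a by simp
    have "1 + c0 * (2 powr \<beta> * (1 + ln a / ln 2)) = (1 + c0 * 2 powr \<beta>) + (c0 * 2 powr \<beta> / ln 2) * ln a"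
      by (simp add: algebra_simps)
    also have "\<dots> \<le> Ke * 1 + Ke * ln a" unfolding Ke_def using l c0_pos
      by (intro add_mono mult_right_mono) auto
    finally show ?thesis by (simp add: algebra_simps)
  qed
  finally show "EW w (\<lambda>u. u powr \<beta> * indicator {..<a} u) \<le> Ke * (1 + ln a)" .
qed

lemma lborel_leb:
  fixes h :: "real \<Rightarrow> real"
  assumes m: "(\<lambda>x. indicator S x * h x) \<in> borel_measurable borel"
  shows "set_integrable lborel S h \<longleftrightarrow> h absolutely_integrable_on S"
    "h absolutely_integrable_on S \<Longrightarrow> (LINT x:S|lborel. h x) = integral S h"
proof -
  have m': "(\<lambda>x. indicator S x *\<^sub>R h x) \<in> lborel \<rightarrow>\<^sub>M borel" using m by simp
  show e: "set_integrable lborel S h \<longleftrightarrow> h absolutely_integrable_on S"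
    unfolding set_integrable_def using integrable_completion[OF m'] by simp
  assume "h absolutely_integrable_on S"
  then show "(LINT x:S|lborel. h x) = integral S h"
    using set_lebesgue_integral_eq_integral(2)[of S h] integral_completion[OF m']
    by (simp add: set_lebesgue_integral_def)
qed

lemma subst_lemma:
  fixes F :: "real \<Rightarrow> real"
  assumes Fm: "(\<lambda>z. indicator {0<..} z * F z) \<in> borel_measurable borel"
  shows "(LINT z:{0<..}|lborel. F z * z powr (-1 - 1/\<beta>) * w (z powr (-1/\<beta>))) = \<beta> * EW w (\<lambda>u. F (u powr (- \<beta>)))"
proof -
  define S :: "real set" where "S = {0<..}"
  define g where "g u = u powr (- \<beta>)" for u :: real
  define g' where "g' u = - \<beta> * u powr (- \<beta> - 1)" for u :: real
  define f where "f z = F z * z powr (-1 - 1/\<beta>) * w (z powr (-1/\<beta>))" for z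
  define h where "h u = \<beta> * (F (g u) * w u)" for u
  have Sl: "S \<in> sets lebesgue" unfolding S_def by simp
  have der: "(g has_field_derivative g' u) (at u within S)" if "u \<in> S" for u
    unfolding g_def g'_def using has_real_derivative_powr[of u "- \<beta>"] that
    by (auto simp: S_def intro: has_field_derivative_at_within)
  have inj: "inj_on g S" unfolding inj_on_def g_def S_def
  proof (intro ballI impI)
    fix x y :: real assume xy: "x \<in> {0<..}" "y \<in> {0<..}" "x powr - \<beta> = y powr - \<beta>"
    have "x = (x powr - \<beta>) powr (-1/\<beta>)" using xy(1) b0 by (simp add: powr_powr)
    also have "\<dots> = (y powr - \<beta>) powr (-1/\<beta>)" using xy(3) by simp
    also have "\<dots> = y" using xy(2) b0 by (simp add: powr_powr)
    finally show "x = y" .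
  qed
  have gS: "g ` S = S"
  proof
    show "g ` S \<subseteq> S" unfolding g_def S_def by auto
    show "S \<subseteq> g ` S"
    proof
      fix z assume z: "z \<in> S"
      then have "z = g (z powr (-1/\<beta>))" unfolding g_def S_def using b0 by (simp add: powr_powr)
      moreover have "z powr (-1/\<beta>) \<in> S" using z unfolding S_def by simp
      ultimately show "z \<in> g ` S" by blast
    qed
  qed
  have hf: "\<bar>g' u\<bar> * f (g u) = h u" if "u \<in> S" for u
  proof -
    have u: "u > 0" using that S_def by simp
    have "(u powr - \<beta>) powr (-1 - 1/\<beta>) = u powr (\<beta> + 1)" using b0 by (simp add: powr_powr algebra_simps)
    moreover have "(u powr - \<beta>) powr (-1/\<beta>) = u" using b0 u by (simp add: powr_powr)
    moreover have "u powr (- \<beta> - 1) * u powr (\<beta> + 1) = 1" using u by (simp add: powr_add[symmetric])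
    ultimately show ?thesis unfolding g'_def f_def h_def g_def using b0
      by (simp add: abs_mult algebra_simps)
  qed
  have cv: "(\<lambda>u. \<bar>g' u\<bar> * f (g u)) absolutely_integrable_on S \<and> integral S (\<lambda>u. \<bar>g' u\<bar> * f (g u)) = b
     \<longleftrightarrow> f absolutely_integrable_on S \<and> integral S f = b" for b
    using has_absolute_integral_change_of_variables_1'[OF Sl der inj, of f b] gS by simp
  have hcong1: "(\<lambda>u. \<bar>g' u\<bar> * f (g u)) absolutely_integrable_on S \<longleftrightarrow> h absolutely_integrable_on S"
    unfolding set_integrable_def using hf
    by (intro arg_cong[where f="integrable lebesgue"] ext) (auto simp: indicator_def)
  have hcong2: "integral S (\<lambda>u. \<bar>g' u\<bar> * f (g u)) = integral S h"
    using hf by (intro integral_cong) auto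
  have fm: "(\<lambda>z. indicator S z * f z) \<in> borel_measurable borel"
  proof -
    have "(\<lambda>z. (indicator {0<..} z * F z) * (z powr (-1 - 1/\<beta>) * w (z powr (-1/\<beta>)))) \<in> borel_measurable borel"
      using Fm by measurable
    then show ?thesis unfolding S_def f_def by (simp add: algebra_simps)
  qed
  have hm: "(\<lambda>u. indicator S u * h u) \<in> borel_measurable borel"
  proof -
    have "(\<lambda>u. indicator {0<..} u * (\<beta> * ((\<lambda>z. indicator {0<..} z * F z) (u powr (- \<beta>)) * w u))) \<in> borel_measurable borel"
      by (intro borel_measurable_times borel_measurable_const measurable_compose[OF _ Fm]) measurable
    moreover have "indicator {0<..} u * (\<beta> * ((\<lambda>z. indicator {0<..} z * F z) (u powr (- \<beta>)) * w u)) = indicator S u * h u" for u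
      unfolding S_def h_def g_def by (auto simp: indicator_def)
    ultimately show ?thesis by simp
  qed
  have lhs: "(LINT z:{0<..}|lborel. F z * z powr (-1 - 1/\<beta>) * w (z powr (-1/\<beta>))) = (LINT z:S|lborel. f z)"
    unfolding S_def f_def ..
  have rhs: "\<beta> * EW w (\<lambda>u. F (u powr (- \<beta>))) = (LINT u:S|lborel. h u)"
    unfolding EW_def S_def h_def g_def by simp
  show ?thesis unfolding lhs rhs
  proof (cases "f absolutely_integrable_on S")
    case True
    then have "h absolutely_integrable_on S \<and> integral S h = integral S f"
      using cv[of "integral S f"] hcong1 hcong2 by simp
    then show "(LINT z:S|lborel. f z) = (LINT u:S|lborel. h u)"
      using lborel_leb[OF fm] lborel_leb[OF hm] True by simp
  next
    case False
    then have "\<not> h absolutely_integrable_on S"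
      using cv[of "integral S h"] hcong1 hcong2 by auto
    then have "\<not> set_integrable lborel S h" "\<not> set_integrable lborel S f"
      using lborel_leb(1)[OF fm] lborel_leb(1)[OF hm] False by auto
    then show "(LINT z:S|lborel. f z) = (LINT u:S|lborel. h u)"
      unfolding set_integrable_def set_lebesgue_integral_def by (simp add: not_integrable_integral_eq)
  qed
qed

lemma Gbeta_EW:
  fixes G :: "real \<Rightarrow> 'a::topological_space \<Rightarrow> 'b::topological_space \<Rightarrow> real"
  assumes Gc: "continuous_on ({0<..} \<times> UNIV \<times> UNIV) (\<lambda>(s, x, y). G s x y)" and t: "t > 0"
  shows "(1 / \<beta>) * (LINT z:{0<..}|lborel. G (t powr \<beta> * z) x y * z powr (-1 - 1/\<beta>) * w (z powr (-1/\<beta>)))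
     = EW w (\<lambda>u. G (t powr \<beta> * u powr (- \<beta>)) x y)"
proof -
  have c: "continuous_on {0<..} (\<lambda>z. G (t powr \<beta> * z) x y)"
  proof -
    have "continuous_on {0<..} (\<lambda>z. (t powr \<beta> * z, x, y))" by (intro continuous_intros)
    moreover have "(\<lambda>z. (t powr \<beta> * z, x, y)) ` {0<..} \<subseteq> {0<..} \<times> UNIV" using t by auto
    ultimately show ?thesis using continuous_on_compose2[OF Gc, of "{0<..}" "\<lambda>z. (t powr \<beta> * z, x, y)"]
      by simp
  qed
  have m: "(\<lambda>z. indicator {0<..} z * G (t powr \<beta> * z) x y) \<in> borel_measurable borel"
    using borel_measurable_continuous_on_indicator[OF _ c] by simp
  show ?thesis using subst_lemma[OF m] b0 by (simp add: mult.assoc)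
qed

lemma mvt_bound:
  fixes g g' :: "real \<Rightarrow> real"
  assumes der: "\<And>h. \<bar>h\<bar> < \<delta> \<Longrightarrow> (g has_real_derivative g' h) (at h)"
    and bd: "\<And>h. \<bar>h\<bar> < \<delta> \<Longrightarrow> \<bar>g' h\<bar> \<le> B"
    and h: "\<bar>h\<bar> < \<delta>"
  shows "\<bar>g h - g 0\<bar> \<le> B * \<bar>h\<bar>"
proof (cases h "0::real" rule: linorder_cases)
  case less
  obtain z where z: "h < z" "z < 0" "g 0 - g h = (0 - h) * g' z"
    using MVT2[OF less, of g g'] der h by force
  have "\<bar>z\<bar> < \<delta>" using z h by auto
  then show ?thesis using z bd[of z] by (simp add: abs_mult mult.commute mult_left_mono abs_minus_commute)
next
  case greater
  obtain z where z: "0 < z" "z < h" "g h - g 0 = (h - 0) * g' z"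
    using MVT2[OF greater, of g g'] der h by force
  have "\<bar>z\<bar> < \<delta>" using z h by auto
  then show ?thesis using z bd[of z] by (simp add: abs_mult mult.commute mult_left_mono)
qed simp

lemma IW_abs: assumes "IW w f" shows "IW w (\<lambda>u. \<bar>f u\<bar>)"
proof -
  have "integrable lborel (\<lambda>u. \<bar>indicator {0<..} u * (f u * w u)\<bar>)"
    using assms unfolding IW_iff by (rule integrable_abs)
  also have "(\<lambda>u. \<bar>indicator {0<..} u * (f u * w u)\<bar>) = (\<lambda>u. indicator {0<..} u * (\<bar>f u\<bar> * w u))"
    using w_nn by (auto simp: indicator_def abs_mult)
  finally show ?thesis unfolding IW_iff .
qed

lemma EW_deriv:
  fixes f f' :: "real \<Rightarrow> real \<Rightarrow> real"
  assumes d: "\<delta> > 0"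
    and der: "\<And>u h. u > 0 \<Longrightarrow> \<bar>h\<bar> < \<delta> \<Longrightarrow> ((\<lambda>h. f u h) has_real_derivative f' u h) (at h)"
    and bnd: "\<And>u h. u > 0 \<Longrightarrow> \<bar>h\<bar> < \<delta> \<Longrightarrow> \<bar>f' u h\<bar> \<le> B u"
    and BI: "IW w B"
    and fm: "\<And>h. \<bar>h\<bar> < \<delta> \<Longrightarrow> (\<lambda>u. indicator {0<..} u * f u h) \<in> borel_measurable borel"
    and f0I: "IW w (\<lambda>u. f u 0)"
    and f'm: "(\<lambda>u. indicator {0<..} u * f' u 0) \<in> borel_measurable borel"
  shows "((\<lambda>h. EW w (\<lambda>u. f u h)) has_real_derivative EW w (\<lambda>u. f' u 0)) (at 0)"
proof -
  have mv: "\<bar>f u h - f u 0\<bar> \<le> B u * \<bar>h\<bar>" if "u > 0" "\<bar>h\<bar> < \<delta>" for u h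
    using mvt_bound[of \<delta> "f u" "f' u" "B u" h] der bnd that by auto
  have fI: "IW w (\<lambda>u. f u h)" if h: "\<bar>h\<bar> < \<delta>" for h
  proof (rule IW_dom)
    show "IW w (\<lambda>u. \<bar>f u 0\<bar> + \<bar>h\<bar> * B u)"
      by (intro EW_add EW_cmult IW_abs f0I BI)
    show "(\<lambda>u. indicator {0<..} u * f u h) \<in> borel_measurable borel" using fm h .
    fix u :: real assume u: "u > 0"
    show "\<bar>f u h\<bar> \<le> \<bar>f u 0\<bar> + \<bar>h\<bar> * B u" using mv[OF u h] by (simp add: mult.commute)
  qed
  define q where "q h u = (f u h - f u 0) / h" for h u
  have qE: "EW w (q h) = (EW w (\<lambda>u. f u h) - EW w (\<lambda>u. f u 0)) / h" if h: "\<bar>h\<bar> < \<delta>" for h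
  proof -
    have I: "IW w (\<lambda>u. (1/h) * f u h)" "IW w (\<lambda>u. (- 1/h) * f u 0)"
      by (rule EW_cmult(1)[OF fI[OF h]], rule EW_cmult(1)[OF f0I])
    have "EW w (\<lambda>u. (1/h) * f u h + (- 1/h) * f u 0) = EW w (\<lambda>u. (1/h) * f u h) + EW w (\<lambda>u. (- 1/h) * f u 0)"
      by (rule EW_add(2)[OF I])
    also have "\<dots> = (1/h) * EW w (\<lambda>u. f u h) + (-1/h) * EW w (\<lambda>u. f u 0)"
      by (simp only: EW_cmult(2)[OF fI[OF h]] EW_cmult(2)[OF f0I])
    finally have F1: "EW w (\<lambda>u. (1/h) * f u h + (- 1/h) * f u 0) = (1/h) * EW w (\<lambda>u. f u h) + (-1/h) * EW w (\<lambda>u. f u 0)" .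
    have F2: "q h = (\<lambda>u. (1/h) * f u h + (- 1/h) * f u 0)" unfolding q_def by (auto simp: diff_divide_distrib)
    have "EW w (q h) = (1/h) * EW w (\<lambda>u. f u h) + (-1/h) * EW w (\<lambda>u. f u 0)"
      unfolding F2 by (rule F1)
    then show ?thesis by (simp add: diff_divide_distrib)
  qed
  have lim: "((\<lambda>h. (f u h - f u 0) / h) \<longlongrightarrow> f' u 0) (at 0)" if u: "u > 0" for u
    using der[OF u, of 0] d unfolding has_field_derivative_iff by simp
  have "((\<lambda>h. EW w (q h)) \<longlongrightarrow> EW w (\<lambda>u. f' u 0)) (at 0)"
    unfolding tendsto_at_iff_sequentially comp_def
  proof (intro allI impI)
    fix X :: "nat \<Rightarrow> real" assume X: "\<forall>i. X i \<in> UNIV - {0}" "X \<longlonglongrightarrow> 0"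
    obtain N where N: "\<And>n. n \<ge> N \<Longrightarrow> \<bar>X n\<bar> < \<delta>"
      using X(2) d unfolding LIMSEQ_iff by auto
    define s where "s n u = indicator {0<..} u * (q (X (n + N)) u * w u)" for n u
    have "(\<lambda>n. integral\<^sup>L lborel (s n)) \<longlonglongrightarrow> integral\<^sup>L lborel (\<lambda>u. indicator {0<..} u * (f' u 0 * w u))"
    proof (rule integral_dominated_convergence[where w="\<lambda>u. indicator {0<..} u * (B u * w u)"])
      show "(\<lambda>u. indicator {0<..} u * (f' u 0 * w u)) \<in> borel_measurable lborel"
        using f'm by (simp add: mult.assoc[symmetric])
      show "s n \<in> borel_measurable lborel" for n
      proof -
        have h: "\<bar>X (n+N)\<bar> < \<delta>" by (rule N) simp
        have "(\<lambda>u. (indicator {0<..} u * f u (X (n+N)) - indicator {0<..} u * f u 0) / X (n+N) * w u) \<in> borel_measurable borel"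
        proof -
          have A: "(\<lambda>u. indicator {0<..} u * f u (X (n+N))) \<in> borel_measurable borel" using fm[OF h] .
          have B: "(\<lambda>u. indicator {0<..} u * f u 0) \<in> borel_measurable borel" using fm[of 0] d by simp
          show ?thesis
            by (intro borel_measurable_times borel_measurable_divide borel_measurable_diff A B w_meas borel_measurable_const)
        qed
        then show ?thesis unfolding s_def q_def by (simp add: algebra_simps diff_divide_distrib)
      qed
      show "integrable lborel (\<lambda>u. indicator {0<..} u * (B u * w u))" using BI unfolding IW_iff .
      show "AE u in lborel. (\<lambda>n. s n u) \<longlonglongrightarrow> indicator {0<..} u * (f' u 0 * w u)"
      proof (intro AE_I2)
        fix u :: real
        show "(\<lambda>n. s n u) \<longlonglongrightarrow> indicator {0<..} u * (f' u 0 * w u)"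
        proof (cases "u > 0")
          case True
          have X': "(\<lambda>n. X (n + N)) \<longlonglongrightarrow> 0" using X(2) by (rule LIMSEQ_ignore_initial_segment)
          have "(\<lambda>n. q (X (n + N)) u) \<longlonglongrightarrow> f' u 0"
            using lim[OF True] X' X(1) unfolding q_def tendsto_at_iff_sequentially comp_def by auto
          then show ?thesis unfolding s_def using True by (auto intro!: tendsto_mult)
        qed (simp add: s_def)
      qed
      show "AE u in lborel. norm (s n u) \<le> indicator {0<..} u * (B u * w u)" for n
      proof (intro AE_I2)
        fix u :: real
        have h: "\<bar>X (n+N)\<bar> < \<delta>" by (rule N) simp
        have h0: "X (n+N) \<noteq> 0" using X(1) by auto
        show "norm (s n u) \<le> indicator {0<..} u * (B u * w u)"
        proof (cases "u > 0")
          case True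
          have "\<bar>q (X (n+N)) u\<bar> \<le> B u" unfolding q_def using mv[OF True h] h0
            by (simp add: abs_divide divide_le_eq)
          then show ?thesis unfolding s_def using True w_nn[OF True]
            by (simp add: abs_mult mult_right_mono)
        qed (simp add: s_def)
      qed
    qed
    then show "(\<lambda>n. EW w (q (X n))) \<longlonglongrightarrow> EW w (\<lambda>u. f' u 0)"
      unfolding EW_eq s_def by (rule LIMSEQ_offset)
  qed
  then have "((\<lambda>h. (EW w (\<lambda>u. f u h) - EW w (\<lambda>u. f u 0)) / h) \<longlongrightarrow> EW w (\<lambda>u. f' u 0)) (at 0)"
  proof (rule Lim_transform_within[OF _ d])
    fix h :: real assume "0 < dist h 0" "dist h 0 < \<delta>"
    then show "EW w (q h) = (EW w (\<lambda>u. f u h) - EW w (\<lambda>u. f u 0)) / h" using qE by simp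
  qed
  then show ?thesis unfolding has_field_derivative_iff by simp
qed

definition "E0 A = EW w (\<lambda>u. exp (A * u powr (- \<beta>)))"
definition "E1 = EW w (\<lambda>u. u powr (- \<beta>))"
definition "E2 A = EW w (\<lambda>u. exp (A * u powr (- \<beta>)) * u powr (- \<beta>))"

lemma bound_B1:
  assumes A: "A1 \<ge> 0" "A2 \<ge> 0" and M: "M \<ge> 0"
    and H: "\<And>u. u > 0 \<Longrightarrow> \<bar>H u\<bar> \<le> M * (A1 * u powr (- \<beta>) + exp (A2 * u powr (- \<beta>)) * u powr (- \<beta>))"
  shows "\<bar>EW w H\<bar> \<le> M * (A1 * E1 + E2 A2)"
proof -
  have I1: "IW w (\<lambda>u. A1 * u powr (- \<beta>))" by (rule EW_cmult(1)[OF negmom])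
  have I2: "IW w (\<lambda>u. exp (A2 * u powr (- \<beta>)) * u powr (- \<beta>))" by (rule negexpmom[OF A(2)])
  have I: "IW w (\<lambda>u. M * (A1 * u powr (- \<beta>) + exp (A2 * u powr (- \<beta>)) * u powr (- \<beta>)))"
    by (rule EW_cmult(1)[OF EW_add(1)[OF I1 I2]])
  have "\<bar>EW w H\<bar> \<le> EW w (\<lambda>u. M * (A1 * u powr (- \<beta>) + exp (A2 * u powr (- \<beta>)) * u powr (- \<beta>)))"
    by (rule EW_bound[OF I H])
  also have "\<dots> = M * (A1 * E1 + E2 A2)"
    unfolding EW_cmult(2)[OF EW_add(1)[OF I1 I2]] EW_add(2)[OF I1 I2] EW_cmult(2)[OF negmom] E1_def E2_def ..
  finally show ?thesis .
qed

definition "Mlow q = 1 + c0 * (2 powr q / (1 - 2 powr (q - \<beta>)))"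

lemma bound_B2:
  assumes A: "A1 \<ge> 0" "A2 \<ge> 0" and q: "0 < q" "q < \<beta>" and T: "T \<ge> 1"
    and H: "\<And>u. u > 0 \<Longrightarrow> \<bar>H u\<bar> \<le> A1 * T * u powr q + exp (A2 * u powr (- \<beta>))"
  shows "\<bar>EW w H\<bar> \<le> T * (A1 * Mlow q + E0 A2)"
proof -
  have I1: "IW w (\<lambda>u. (A1 * T) * u powr q)" by (rule EW_cmult(1)[OF lowmom(1)[OF q]])
  have I2: "IW w (\<lambda>u. exp (A2 * u powr (- \<beta>)))" by (rule expmom[OF A(2)])
  have "\<bar>EW w H\<bar> \<le> EW w (\<lambda>u. (A1 * T) * u powr q + exp (A2 * u powr (- \<beta>)))"
    by (rule EW_bound[OF EW_add(1)[OF I1 I2]]) (use H in simp)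
  also have "\<dots> = A1 * T * EW w (\<lambda>u. u powr q) + E0 A2"
    unfolding EW_add(2)[OF I1 I2] EW_cmult(2)[OF lowmom(1)[OF q]] E0_def ..
  also have "\<dots> \<le> A1 * T * Mlow q + T * E0 A2"
  proof (intro add_mono)
    show "A1 * T * EW w (\<lambda>u. u powr q) \<le> A1 * T * Mlow q"
      using lowmom(2)[OF q] A T unfolding Mlow_def by (intro mult_left_mono) auto
    have "0 \<le> E0 A2" unfolding E0_def by (rule EW_nonneg) simp
    then show "E0 A2 \<le> T * E0 A2" using T by (simp add: mult_le_cancel_right1)
  qed
  finally show ?thesis by (simp add: algebra_simps)
qed

lemma bound_B3:
  assumes A: "A2 \<ge> 0" and M: "M1 \<ge> 0" "M2 \<ge> 0" and q: "0 < q" and a: "a \<ge> 1"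
    and H: "\<And>u. u > 0 \<Longrightarrow> \<bar>H u\<bar> \<le> M1 * (u powr (- \<beta>) * indicator {a..} u)
       + M2 * (u powr q * indicator {..<a} u) + exp (A2 * u powr (- \<beta>))"
    and IT: "IW w (\<lambda>u. u powr q * indicator {..<a} u)"
  shows "\<bar>EW w H\<bar> \<le> M1 * (c0 * a powr (- 2 * \<beta>)) + M2 * EW w (\<lambda>u. u powr q * indicator {..<a} u) + E0 A2"
proof -
  have a0: "a > 0" using a by simp
  have I1: "IW w (\<lambda>u. M1 * (u powr (- \<beta>) * indicator {a..} u))" by (rule EW_cmult(1)[OF negtail(1)[OF a0]])
  have I2: "IW w (\<lambda>u. M2 * (u powr q * indicator {..<a} u))" by (rule EW_cmult(1)[OF IT])
  have I3: "IW w (\<lambda>u. exp (A2 * u powr (- \<beta>)))" by (rule expmom[OF A])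
  have I12: "IW w (\<lambda>u. M1 * (u powr (- \<beta>) * indicator {a..} u) + M2 * (u powr q * indicator {..<a} u))"
    by (rule EW_add(1)[OF I1 I2])
  have "\<bar>EW w H\<bar> \<le> EW w (\<lambda>u. (M1 * (u powr (- \<beta>) * indicator {a..} u) + M2 * (u powr q * indicator {..<a} u)) + exp (A2 * u powr (- \<beta>)))"
    by (rule EW_bound[OF EW_add(1)[OF I12 I3]]) (use H in simp)
  also have "\<dots> = M1 * EW w (\<lambda>u. u powr (- \<beta>) * indicator {a..} u) + M2 * EW w (\<lambda>u. u powr q * indicator {..<a} u) + E0 A2"
    unfolding EW_add(2)[OF I12 I3] EW_add(2)[OF I1 I2] EW_cmult(2)[OF negtail(1)[OF a0]] EW_cmult(2)[OF IT] E0_def ..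
  also have "\<dots> \<le> M1 * (c0 * a powr (- 2 * \<beta>)) + M2 * EW w (\<lambda>u. u powr q * indicator {..<a} u) + E0 A2"
    using negtail(2)[OF a0] M by (intro add_mono mult_left_mono) auto
  finally show ?thesis .
qed

end

lemma pw_le1: fixes r a :: real assumes a: "0 < a" and r: "0 \<le> r" shows "r powr a \<le> 1 \<longleftrightarrow> r \<le> 1"
proof
  assume "r \<le> 1" then show "r powr a \<le> 1" using powr_mono2[of a r 1] a r by simp
next
  assume h: "r powr a \<le> 1"
  show "r \<le> 1"
  proof (rule ccontr)
    assume "\<not> r \<le> 1"
    then have "1 powr a < r powr a" using a by (intro powr_less_mono2) auto
    then show False using h by simp
  qed
qed

lemma pdiff_has_deriv:
  fixes g :: "real^'n \<Rightarrow> real"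
  assumes dg: "g differentiable (at (x + h0 *\<^sub>R axis i 1))"
  shows "((\<lambda>h. g (x + h *\<^sub>R axis i 1)) has_real_derivative pdiff i g (x + h0 *\<^sub>R axis i 1)) (at h0)"
proof -
  define e :: "real^'n" where "e = axis i 1"
  obtain D where D: "(g has_derivative D) (at (x + h0 *\<^sub>R e))" using dg unfolding e_def differentiable_def by blast
  have lin: "linear D" by (rule has_derivative_linear[OF D])
  have sc: "D (k *\<^sub>R e) = k * D e" for k using linear_scale[OF lin] by simp
  have gen: "((\<lambda>h. g (z + h *\<^sub>R e)) has_real_derivative D e) (at h1)" if z: "z + h1 *\<^sub>R e = x + h0 *\<^sub>R e" for z h1
  proof -
    have inner: "((\<lambda>h. z + h *\<^sub>R e) has_derivative (\<lambda>k. k *\<^sub>R e)) (at h1)"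
      by (auto intro!: derivative_eq_intros)
    have "((\<lambda>h. g (z + h *\<^sub>R e)) has_derivative (\<lambda>k. D (k *\<^sub>R e))) (at h1)"
      using has_derivative_compose[OF inner, of g D] D z by simp
    moreover have "(\<lambda>k. D (k *\<^sub>R e)) = (*) (D e)" by (rule ext) (simp add: sc mult.commute)
    ultimately show ?thesis unfolding has_field_derivative_def by simp
  qed
  have "pdiff i g (x + h0 *\<^sub>R axis i 1) = D e"
    unfolding pdiff_def e_def[symmetric] using gen[of "x + h0 *\<^sub>R e" 0] by (intro DERIV_imp_deriv) simp
  then show ?thesis using gen[of x h0] unfolding e_def by simp
qed

locale gsetting = sd \<beta> w for \<beta> w +
  fixes G :: "real \<Rightarrow> real^'n \<Rightarrow> real^'n \<Rightarrow> real" and \<alpha> A1 A2 :: real and l :: nat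
  assumes al: "0 < \<alpha>" "\<alpha> < 2" and l1: "l \<le> 1"
    and Gc: "continuous_on ({0<..} \<times> UNIV \<times> UNIV) (\<lambda>(s, x, y). G s x y)"
    and Gd: "l \<ge> 1 \<Longrightarrow> \<forall>s>0. \<forall>y x. (\<lambda>x. G s x y) differentiable (at x)"
    and Gdc: "l \<ge> 1 \<Longrightarrow> \<forall>i. continuous_on ({0<..} \<times> UNIV \<times> UNIV) (\<lambda>(s, x, y). pdiff i (\<lambda>x. G s x y) x)"
    and A: "A1 \<ge> 0" "A2 \<ge> 0"
    and Ba: "\<And>is s z y. length is \<le> l \<Longrightarrow> s > 0 \<Longrightarrow> \<bar>Dk is (\<lambda>x. G s x y) z\<bar> \<le>
        (if s < 1 then A1 * s powr (- real (CARD('n) + length is) / \<alpha>) else exp (A2 * s))"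
    and Bb: "\<And>is s z y. length is \<le> l \<Longrightarrow> s > 0 \<Longrightarrow> z \<noteq> y \<Longrightarrow> \<bar>Dk is (\<lambda>x. G s x y) z\<bar> \<le>
        (if s < 1 then A1 * s * norm (z - y) powr (- real (CARD('n) + length is) - \<alpha>)
         else exp (A2 * s) * s * norm (z - y) powr (- real CARD('n) - \<alpha>))"
begin

definition "sig t u = t powr \<beta> * u powr (- \<beta>)"

lemma sig_pos: "t > 0 \<Longrightarrow> u > 0 \<Longrightarrow> sig t u > 0" unfolding sig_def by simp

lemma cont_comp:
  fixes F :: "real \<Rightarrow> real^'n \<Rightarrow> real^'n \<Rightarrow> real"
  assumes Fc: "continuous_on ({0<..} \<times> UNIV \<times> UNIV) (\<lambda>(s, x, y). F s x y)" and t: "t > 0"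
  shows "(\<lambda>u. indicator {0<..} u * F (sig t u) z y) \<in> borel_measurable borel"
proof -
  have "continuous_on {0<..} (\<lambda>u. (sig t u, z, y))" unfolding sig_def by (intro continuous_intros) auto
  moreover have "(\<lambda>u. (sig t u, z, y)) ` {0<..} \<subseteq> {0<..} \<times> UNIV" using t sig_pos by auto
  ultimately have "continuous_on {0<..} (\<lambda>u. F (sig t u) z y)"
    using continuous_on_compose2[OF Fc, of "{0<..}" "\<lambda>u. (sig t u, z, y)"] by simp
  from borel_measurable_continuous_on_indicator[OF _ this] show ?thesis by simp
qed

lemma R0: assumes t: "t > 0" shows "Gbeta G w \<beta> t x y = EW w (\<lambda>u. G (sig t u) x y)"
  unfolding Gbeta_def sig_def using Gbeta_EW[OF Gc t] .


lemma len_cases: assumes "length is \<le> l" obtains "is = []" | i where "is = [i]" "l \<ge> 1"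
proof (cases "is")
  case Nil then show ?thesis using that(1) by simp
next
  case (Cons a list)
  then have "list = []" "l \<ge> 1" using assms l1 by (cases list; auto)+
  then show ?thesis using that(2) Cons by simp
qed

lemma Dk_meas: assumes "length is \<le> l" "t > 0"
  shows "(\<lambda>u. indicator {0<..} u * Dk is (\<lambda>x. G (sig t u) x y) z) \<in> borel_measurable borel"
proof (cases rule: len_cases[OF assms(1)])
  case 1 then show ?thesis using cont_comp[OF Gc assms(2)] by simp
next
  case (2 i)
  have c: "continuous_on ({0<..} \<times> UNIV \<times> UNIV) (\<lambda>(s, x, y). pdiff i (\<lambda>x. G s x y) x)"
    using Gdc 2 by blast
  show ?thesis using cont_comp[of "\<lambda>s a b. pdiff i (\<lambda>x. G s x b) a", OF c assms(2), where z=z and y=y] 2 by simp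
qed

lemma tau: assumes "0 < t" "t < 1" shows "0 < t powr \<beta>" "t powr \<beta> < 1"
  using assms b0 powr_less_mono2[of \<beta> t 1] by auto

lemma exp_sig: assumes t: "0 < t" "t < 1" and u: "u > 0"
  shows "exp (A2 * sig t u) \<le> exp (A2 * u powr (- \<beta>))" "sig t u \<le> u powr (- \<beta>)"
proof -
  show s: "sig t u \<le> u powr (- \<beta>)" unfolding sig_def using tau[OF t] u by (simp add: mult_le_cancel_right1)
  show "exp (A2 * sig t u) \<le> exp (A2 * u powr (- \<beta>))" using s A by (simp add: mult_left_mono)
qed

lemma PB_a: assumes len: "length is \<le> l" and t: "0 < t" "t < 1" and u: "u > 0"
    and p_def: "p = real (CARD('n) + length is) / \<alpha>"
  shows "\<bar>Dk is (\<lambda>x. G (sig t u) x y) z\<bar> \<le>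
    A1 * (t powr \<beta>) powr (- p) * u powr (\<beta> * p) + exp (A2 * u powr (- \<beta>))"
proof -
  have sp: "sig t u > 0" using sig_pos t u by simp
  have tp: "t powr \<beta> > 0" using t by simp
  have nn: "0 \<le> A1 * (t powr \<beta>) powr (- p) * u powr (\<beta> * p)" using A by simp
  show ?thesis
  proof (cases "sig t u < 1")
    case True
    have b: "\<bar>Dk is (\<lambda>x. G (sig t u) x y) z\<bar> \<le> (if sig t u < 1 then A1 * (sig t u) powr (- real (CARD('n) + length is) / \<alpha>) else exp (A2 * sig t u))"
      by (rule Ba[OF len sp])
    have e: "- real (CARD('n) + length is) / \<alpha> = - p" unfolding p_def using al by (simp add: field_simps)
    have "\<bar>Dk is (\<lambda>x. G (sig t u) x y) z\<bar> \<le> A1 * (sig t u) powr (- p)"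
      using b True unfolding e by simp
    also have "(sig t u) powr (- p) = (t powr \<beta>) powr (- p) * u powr (\<beta> * p)"
      unfolding sig_def using tp u by (simp add: powr_mult powr_powr)
    finally show ?thesis by (simp add: mult.assoc add_increasing2 del: exp_gt_zero)
  next
    case False
    have "\<bar>Dk is (\<lambda>x. G (sig t u) x y) z\<bar> \<le> exp (A2 * sig t u)"
      using Ba[OF len sp, of y z] False by simp
    also have "\<dots> \<le> exp (A2 * u powr (- \<beta>))" by (rule exp_sig[OF t u])
    finally show ?thesis using nn by linarith
  qed
qed

lemma PB_b: assumes len: "length is \<le> l" and t: "0 < t" "t < 1" and u: "u > 0" and z: "z \<noteq> y"
  shows "\<bar>Dk is (\<lambda>x. G (sig t u) x y) z\<bar> \<le>
    t powr \<beta> * (A1 * norm (z - y) powr (- real (CARD('n) + length is) - \<alpha>) * u powr (- \<beta>)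
      + exp (A2 * u powr (- \<beta>)) * u powr (- \<beta>) * norm (z - y) powr (- real CARD('n) - \<alpha>))"
proof -
  have sp: "sig t u > 0" using sig_pos t u by simp
  have tp: "t powr \<beta> > 0" using t by simp
  let ?P = "norm (z - y) powr (- real (CARD('n) + length is) - \<alpha>)"
  let ?Q = "norm (z - y) powr (- real CARD('n) - \<alpha>)"
  have n1: "0 \<le> t powr \<beta> * (A1 * ?P * u powr (- \<beta>))" using A by simp
  have n2: "0 \<le> t powr \<beta> * (exp (A2 * u powr (- \<beta>)) * u powr (- \<beta>) * ?Q)" by simp
  show ?thesis
  proof (cases "sig t u < 1")
    case True
    have "\<bar>Dk is (\<lambda>x. G (sig t u) x y) z\<bar> \<le> A1 * sig t u * ?P"
      using Bb[OF len sp z] True by simp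
    also have "\<dots> = t powr \<beta> * (A1 * ?P * u powr (- \<beta>))" unfolding sig_def by (simp add: algebra_simps)
    finally show ?thesis using n2 unfolding distrib_left by linarith
  next
    case False
    have "\<bar>Dk is (\<lambda>x. G (sig t u) x y) z\<bar> \<le> exp (A2 * sig t u) * sig t u * ?Q"
      using Bb[OF len sp z] False by simp
    also have "\<dots> \<le> exp (A2 * u powr (- \<beta>)) * sig t u * ?Q"
      using exp_sig[OF t u] sp by (intro mult_right_mono) auto
    also have "\<dots> = t powr \<beta> * (exp (A2 * u powr (- \<beta>)) * u powr (- \<beta>) * ?Q)"
      unfolding sig_def by (simp add: algebra_simps)
    finally show ?thesis using n1 unfolding distrib_left by linarith
  qed
qed


lemma dom_helper:
  assumes t: "0 < t" "t < 1" and u: "u > 0" and d0: "\<delta> > 0" and r: "\<delta> \<le> r" and m: "m \<le> 1"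
  shows "t powr \<beta> * (A1 * r powr (- real (CARD('n) + m) - \<alpha>) * u powr (- \<beta>)
      + exp (A2 * u powr (- \<beta>)) * u powr (- \<beta>) * r powr (- real CARD('n) - \<alpha>))
    \<le> t powr \<beta> * (A1 * \<delta> powr (- real (CARD('n) + 1) - \<alpha>) + A1 * \<delta> powr (- real CARD('n) - \<alpha>)
         + \<delta> powr (- real CARD('n) - \<alpha>)) * (exp (A2 * u powr (- \<beta>)) * u powr (- \<beta>))"
proof -
  let ?E = "exp (A2 * u powr (- \<beta>)) * u powr (- \<beta>)"
  have e1: "u powr (- \<beta>) \<le> ?E" using A u by (simp add: mult_le_cancel_right1)
  have p2: "r powr (- real CARD('n) - \<alpha>) \<le> \<delta> powr (- real CARD('n) - \<alpha>)"
    using r d0 al by (intro powr_mono2') auto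
  have p1: "r powr (- real (CARD('n) + m) - \<alpha>) \<le> \<delta> powr (- real (CARD('n) + 1) - \<alpha>) + \<delta> powr (- real CARD('n) - \<alpha>)"
  proof (cases "m = 0")
    case True
    then show ?thesis using p2 by (simp add: add_increasing)
  next
    case False
    then have "m = 1" using m by simp
    then have "r powr (- real (CARD('n) + m) - \<alpha>) \<le> \<delta> powr (- real (CARD('n) + 1) - \<alpha>)"
      using r d0 al powr_mono2'[of "- real (CARD('n) + 1) - \<alpha>" \<delta> r] by simp
    then show ?thesis by (simp add: add_increasing2)
  qed
  have "A1 * r powr (- real (CARD('n) + m) - \<alpha>) * u powr (- \<beta>) \<le>
      A1 * (\<delta> powr (- real (CARD('n) + 1) - \<alpha>) + \<delta> powr (- real CARD('n) - \<alpha>)) * ?E"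
    using p1 e1 A by (intro mult_mono) auto
  moreover have "?E * r powr (- real CARD('n) - \<alpha>) \<le> ?E * \<delta> powr (- real CARD('n) - \<alpha>)"
    using p2 by (intro mult_left_mono) auto
  ultimately have "A1 * r powr (- real (CARD('n) + m) - \<alpha>) * u powr (- \<beta>) + ?E * r powr (- real CARD('n) - \<alpha>)
      \<le> (A1 * \<delta> powr (- real (CARD('n) + 1) - \<alpha>) + A1 * \<delta> powr (- real CARD('n) - \<alpha>)
         + \<delta> powr (- real CARD('n) - \<alpha>)) * ?E"
    by (simp add: algebra_simps)
  then show ?thesis using t by (simp add: mult.assoc mult_left_mono)
qed

lemma R1: assumes l: "l \<ge> 1" and t: "0 < t" "t < 1" and xy: "x \<noteq> y"
  shows "pdiff i (\<lambda>x. Gbeta G w \<beta> t x y) x = EW w (\<lambda>u. pdiff i (\<lambda>x. G (sig t u) x y) x)"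
proof -
  define e :: "real^'n" where "e = axis i 1"
  define \<rho> where "\<rho> = norm (x - y)"
  have \<rho>: "\<rho> > 0" unfolding \<rho>_def using xy by simp
  define \<delta> where "\<delta> = \<rho> / 2"
  have d0: "\<delta> > 0" unfolding \<delta>_def using \<rho> by simp
  define f where "f u h = G (sig t u) (x + h *\<^sub>R e) y" for u h
  define f' where "f' u h = pdiff i (\<lambda>x. G (sig t u) x y) (x + h *\<^sub>R e)" for u h
  define K where "K = t powr \<beta> * (A1 * \<delta> powr (- real (CARD('n) + 1) - \<alpha>) + A1 * \<delta> powr (- real CARD('n) - \<alpha>)
         + \<delta> powr (- real CARD('n) - \<alpha>))"
  define B where "B u = K * (exp (A2 * u powr (- \<beta>)) * u powr (- \<beta>))" for u
  have far: "norm (x + h *\<^sub>R e - y) \<ge> \<delta>" "x + h *\<^sub>R e \<noteq> y" if h: "\<bar>h\<bar> < \<delta>" for h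
  proof -
    have "\<rho> \<le> norm (x + h *\<^sub>R e - y) + norm (h *\<^sub>R e)" unfolding \<rho>_def
      using norm_triangle_ineq[of "x + h *\<^sub>R e - y" "- (h *\<^sub>R e)"] by simp
    moreover have "norm (h *\<^sub>R e) = \<bar>h\<bar>" unfolding e_def by simp
    ultimately show "norm (x + h *\<^sub>R e - y) \<ge> \<delta>" using h unfolding \<delta>_def by linarith
    then show "x + h *\<^sub>R e \<noteq> y" using d0 by auto
  qed
  have der: "((\<lambda>h. f u h) has_real_derivative f' u h) (at h)" if "u > 0" "\<bar>h\<bar> < \<delta>" for u h
  proof -
    have "(\<lambda>x. G (sig t u) x y) differentiable (at (x + h *\<^sub>R e))"
      using Gd[OF l] sig_pos[OF t(1) that(1)] by blast
    then show ?thesis unfolding f_def f'_def e_def by (rule pdiff_has_deriv)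
  qed
  have bnd: "\<bar>f' u h\<bar> \<le> B u" if u: "u > 0" and h: "\<bar>h\<bar> < \<delta>" for u h
  proof -
    have len: "length [i] \<le> l" using l by simp
    have "\<bar>f' u h\<bar> \<le> t powr \<beta> * (A1 * norm (x + h *\<^sub>R e - y) powr (- real (CARD('n) + 1) - \<alpha>) * u powr (- \<beta>)
      + exp (A2 * u powr (- \<beta>)) * u powr (- \<beta>) * norm (x + h *\<^sub>R e - y) powr (- real CARD('n) - \<alpha>))"
      using PB_b[OF len t u far(2)[OF h]] unfolding f'_def by simp
    also have "\<dots> \<le> B u" unfolding B_def K_def by (rule dom_helper[OF t u d0 far(1)[OF h]]) simp
    finally show ?thesis .
  qed
  have BI: "IW w B" unfolding B_def by (rule EW_cmult(1)[OF negexpmom[OF A(2)]])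
  have fm: "(\<lambda>u. indicator {0<..} u * f u h) \<in> borel_measurable borel" for h
    unfolding f_def using cont_comp[OF Gc t(1)] by simp
  have f0I: "IW w (\<lambda>u. f u 0)"
  proof (rule IW_dom[OF BI fm])
    fix u :: real assume u: "u > 0"
    have len: "length ([]::'n list) \<le> l" by simp
    have "\<bar>f u 0\<bar> \<le> t powr \<beta> * (A1 * \<rho> powr (- real (CARD('n) + 0) - \<alpha>) * u powr (- \<beta>)
      + exp (A2 * u powr (- \<beta>)) * u powr (- \<beta>) * \<rho> powr (- real CARD('n) - \<alpha>))"
      using PB_b[OF len t u xy] unfolding f_def \<rho>_def by simp
    also have "\<dots> \<le> B u" unfolding B_def K_def
      by (rule dom_helper[OF t u d0]) (use \<rho> in \<open>simp_all add: \<delta>_def\<close>)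
    finally show "\<bar>f u 0\<bar> \<le> B u" .
  qed
  have f'm: "(\<lambda>u. indicator {0<..} u * f' u 0) \<in> borel_measurable borel"
    using Dk_meas[of "[i]" t y x] l t unfolding f'_def by simp
  have D: "((\<lambda>h. EW w (\<lambda>u. f u h)) has_real_derivative EW w (\<lambda>u. f' u 0)) (at 0)"
    by (rule EW_deriv[OF d0 der bnd BI fm f0I f'm])
  have eq: "(\<lambda>h. Gbeta G w \<beta> t (x + h *\<^sub>R e) y) = (\<lambda>h. EW w (\<lambda>u. f u h))"
    unfolding f_def using R0[OF t(1)] by simp
  have "pdiff i (\<lambda>x. Gbeta G w \<beta> t x y) x = EW w (\<lambda>u. f' u 0)"
    unfolding pdiff_def e_def[symmetric] eq by (rule DERIV_imp_deriv[OF D])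
  then show ?thesis unfolding f'_def by simp
qed

lemma REP: assumes len: "length is \<le> l" and t: "0 < t" "t < 1" and c: "is = [] \<or> x \<noteq> y"
  shows "Dk is (\<lambda>x. Gbeta G w \<beta> t x y) x = EW w (\<lambda>u. Dk is (\<lambda>x. G (sig t u) x y) x)"
proof (cases rule: len_cases[OF len])
  case 1 then show ?thesis using R0[OF t(1)] by simp
next
  case (2 i)
  then show ?thesis using R1[OF 2(2) t, of x y i] c by simp
qed


lemma Om_powr:
  assumes r: "\<rho> > 0" and t: "t > 0"
  shows "(\<rho> powr \<alpha> * t powr (- \<beta>)) powr c = \<rho> powr (\<alpha> * c) * (t powr \<beta>) powr (- c)"
proof -
  have "(\<rho> powr \<alpha> * t powr (- \<beta>)) powr c = (\<rho> powr \<alpha>) powr c * (t powr (- \<beta>)) powr c"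
    using r t by (simp add: powr_mult)
  also have "\<dots> = \<rho> powr (\<alpha> * c) * (t powr \<beta>) powr (- c)" by (simp add: powr_powr)
  finally show ?thesis .
qed

lemma tpow: "t > 0 \<Longrightarrow> t powr (- real m * \<beta> / \<alpha>) = (t powr \<beta>) powr (- (real m / \<alpha>))"
  by (simp add: powr_powr algebra_simps)

lemma case_ii:
  assumes len: "length is \<le> l" and t: "0 < t" "t < 1"
    and \<rho>_def: "\<rho> = norm (x - y)" and \<Omega>_def: "\<Omega> = \<rho> powr \<alpha> * t powr (- \<beta>)"
    and O: "1 \<le> \<Omega>" "\<Omega> \<le> t powr (- \<beta>)"
  shows "\<bar>Dk is (\<lambda>x. Gbeta G w \<beta> t x y) x\<bar> \<le> (A1 * E1 + E2 A2) *
     (t powr (- real (CARD('n) + length is) * \<beta> / \<alpha>) * \<Omega> powr (- 1 - real (CARD('n) + length is) / \<alpha>))"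
proof -
  define p where "p = real (CARD('n) + length is) / \<alpha>"
  have tp: "t powr \<beta> > 0" using t by simp
  have xy: "x \<noteq> y" using O(1) unfolding \<Omega>_def \<rho>_def by auto
  have r0: "\<rho> > 0" using xy \<rho>_def by simp
  have r1: "\<rho> \<le> 1"
  proof -
    have "\<rho> powr \<alpha> * t powr (- \<beta>) \<le> 1 * t powr (- \<beta>)" using O unfolding \<Omega>_def by simp
    then have "\<rho> powr \<alpha> \<le> 1" using t by simp
    then show ?thesis using r0 al pw_le1 by simp
  qed
  define M where "M = t powr \<beta> * \<rho> powr (- real (CARD('n) + length is) - \<alpha>)"
  have M0: "M \<ge> 0" unfolding M_def by simp
  have H: "\<bar>Dk is (\<lambda>x. G (sig t u) x y) x\<bar> \<le> M * (A1 * u powr (- \<beta>) + exp (A2 * u powr (- \<beta>)) * u powr (- \<beta>))"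
    if u: "u > 0" for u
  proof -
    have "\<rho> powr (- real CARD('n) - \<alpha>) \<le> \<rho> powr (- real (CARD('n) + length is) - \<alpha>)"
      using r0 r1 by (intro powr_mono') auto
    then have Yle: "exp (A2 * u powr (- \<beta>)) * u powr (- \<beta>) * \<rho> powr (- real CARD('n) - \<alpha>) \<le>
        exp (A2 * u powr (- \<beta>)) * u powr (- \<beta>) * \<rho> powr (- real (CARD('n) + length is) - \<alpha>)"
      by (intro mult_left_mono) auto
    have "t powr \<beta> * (A1 * \<rho> powr (- real (CARD('n) + length is) - \<alpha>) * u powr (- \<beta>)
      + exp (A2 * u powr (- \<beta>)) * u powr (- \<beta>) * \<rho> powr (- real CARD('n) - \<alpha>)) \<le>
      t powr \<beta> * (A1 * \<rho> powr (- real (CARD('n) + length is) - \<alpha>) * u powr (- \<beta>)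
      + exp (A2 * u powr (- \<beta>)) * u powr (- \<beta>) * \<rho> powr (- real (CARD('n) + length is) - \<alpha>))"
      by (rule mult_left_mono[OF add_left_mono[OF Yle]]) (use tp in simp)
    also have "\<dots> = M * (A1 * u powr (- \<beta>) + exp (A2 * u powr (- \<beta>)) * u powr (- \<beta>))"
      unfolding M_def by (simp add: algebra_simps)
    finally show ?thesis using PB_b[OF len t u xy] unfolding \<rho>_def by linarith
  qed
  have "\<bar>Dk is (\<lambda>x. Gbeta G w \<beta> t x y) x\<bar> = \<bar>EW w (\<lambda>u. Dk is (\<lambda>x. G (sig t u) x y) x)\<bar>"
    using REP[OF len t] xy by simp
  also have "\<dots> \<le> M * (A1 * E1 + E2 A2)" by (rule bound_B1[OF A M0 H])
  also have "M = t powr (- real (CARD('n) + length is) * \<beta> / \<alpha>) * \<Omega> powr (- 1 - p)"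
  proof -
    have "t powr (- real (CARD('n) + length is) * \<beta> / \<alpha>) * \<Omega> powr (- 1 - p)
      = (t powr \<beta>) powr (- p) * (\<rho> powr (\<alpha> * (- 1 - p)) * (t powr \<beta>) powr (- (- 1 - p)))"
      unfolding \<Omega>_def Om_powr[OF r0 t(1)] tpow[OF t(1)] p_def ..
    also have "\<dots> = ((t powr \<beta>) powr (- p) * (t powr \<beta>) powr (- (- 1 - p))) * \<rho> powr (\<alpha> * (- 1 - p))"
      by (simp only: mult_ac)
    also have "(t powr \<beta>) powr (- p) * (t powr \<beta>) powr (- (- 1 - p)) = (t powr \<beta>) powr 1"
      by (simp add: powr_add[symmetric])
    also have "\<alpha> * (- 1 - p) = - real (CARD('n) + length is) - \<alpha>" unfolding p_def using al by (simp add: field_simps)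
    finally show ?thesis unfolding M_def by simp
  qed
  finally show ?thesis unfolding p_def by (simp add: mult.commute)
qed


lemma case_iii:
  assumes len: "length is \<le> l" and t: "0 < t" "t < 1"
    and \<rho>_def: "\<rho> = norm (x - y)" and \<Omega>_def: "\<Omega> = \<rho> powr \<alpha> * t powr (- \<beta>)"
    and O: "t powr (- \<beta>) \<le> \<Omega>"
  shows "\<bar>Dk is (\<lambda>x. Gbeta G w \<beta> t x y) x\<bar> \<le> (A1 * E1 + E2 A2) *
     (t powr (- real CARD('n) * \<beta> / \<alpha>) * \<Omega> powr (- 1 - real CARD('n) / \<alpha>))"
proof -
  define p where "p = real CARD('n) / \<alpha>"
  have tp: "t powr \<beta> > 0" using t by simp
  have r1': "1 \<le> \<rho> powr \<alpha>"
  proof -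
    have "1 * t powr (- \<beta>) \<le> \<rho> powr \<alpha> * t powr (- \<beta>)" using O unfolding \<Omega>_def by simp
    then show ?thesis using t by simp
  qed
  have xy: "x \<noteq> y" using r1' unfolding \<rho>_def by auto
  have r0: "\<rho> > 0" using xy \<rho>_def by simp
  have r1: "1 \<le> \<rho>"
  proof (rule ccontr)
    assume "\<not> 1 \<le> \<rho>"
    then have "\<rho> powr \<alpha> < 1 powr \<alpha>" using al r0 by (intro powr_less_mono2) auto
    then show False using r1' by simp
  qed
  define M where "M = t powr \<beta> * \<rho> powr (- real CARD('n) - \<alpha>)"
  have M0: "M \<ge> 0" unfolding M_def by simp
  have H: "\<bar>Dk is (\<lambda>x. G (sig t u) x y) x\<bar> \<le> M * (A1 * u powr (- \<beta>) + exp (A2 * u powr (- \<beta>)) * u powr (- \<beta>))"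
    if u: "u > 0" for u
  proof -
    have "\<rho> powr (- real (CARD('n) + length is) - \<alpha>) \<le> \<rho> powr (- real CARD('n) - \<alpha>)"
      using r1 by (intro powr_mono) auto
    then have Yle: "A1 * \<rho> powr (- real (CARD('n) + length is) - \<alpha>) * u powr (- \<beta>) \<le>
        A1 * \<rho> powr (- real CARD('n) - \<alpha>) * u powr (- \<beta>)"
      using A by (intro mult_right_mono mult_left_mono) auto
    have "t powr \<beta> * (A1 * \<rho> powr (- real (CARD('n) + length is) - \<alpha>) * u powr (- \<beta>)
      + exp (A2 * u powr (- \<beta>)) * u powr (- \<beta>) * \<rho> powr (- real CARD('n) - \<alpha>)) \<le>
      t powr \<beta> * (A1 * \<rho> powr (- real CARD('n) - \<alpha>) * u powr (- \<beta>)
      + exp (A2 * u powr (- \<beta>)) * u powr (- \<beta>) * \<rho> powr (- real CARD('n) - \<alpha>))"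
      by (rule mult_left_mono[OF add_right_mono[OF Yle]]) (use tp in simp)
    also have "\<dots> = M * (A1 * u powr (- \<beta>) + exp (A2 * u powr (- \<beta>)) * u powr (- \<beta>))"
      unfolding M_def by (simp add: algebra_simps)
    finally show ?thesis using PB_b[OF len t u xy] unfolding \<rho>_def by linarith
  qed
  have "\<bar>Dk is (\<lambda>x. Gbeta G w \<beta> t x y) x\<bar> = \<bar>EW w (\<lambda>u. Dk is (\<lambda>x. G (sig t u) x y) x)\<bar>"
    using REP[OF len t] xy by simp
  also have "\<dots> \<le> M * (A1 * E1 + E2 A2)" by (rule bound_B1[OF A M0 H])
  also have "M = t powr (- real CARD('n) * \<beta> / \<alpha>) * \<Omega> powr (- 1 - p)"
  proof -
    have "t powr (- real CARD('n) * \<beta> / \<alpha>) * \<Omega> powr (- 1 - p)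
      = (t powr \<beta>) powr (- p) * (\<rho> powr (\<alpha> * (- 1 - p)) * (t powr \<beta>) powr (- (- 1 - p)))"
      unfolding \<Omega>_def Om_powr[OF r0 t(1)] tpow[OF t(1)] p_def ..
    also have "\<dots> = ((t powr \<beta>) powr (- p) * (t powr \<beta>) powr (- (- 1 - p))) * \<rho> powr (\<alpha> * (- 1 - p))"
      by (simp only: mult_ac)
    also have "(t powr \<beta>) powr (- p) * (t powr \<beta>) powr (- (- 1 - p)) = (t powr \<beta>) powr 1"
      by (simp add: powr_add[symmetric])
    also have "\<alpha> * (- 1 - p) = - real CARD('n) - \<alpha>" unfolding p_def using al by (simp add: field_simps)
    finally show ?thesis unfolding M_def by simp
  qed
  finally show ?thesis unfolding p_def by (simp add: mult.commute)
qed


lemma T_ge1: assumes t: "0 < t" "t < 1" and p: "p \<ge> 0" shows "1 \<le> (t powr \<beta>) powr (- p)"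
proof -
  have "(t powr \<beta>) powr 0 \<le> (t powr \<beta>) powr (- p)"
    using tau[OF t] p by (intro powr_mono') auto
  then show ?thesis using tau[OF t] by simp
qed

lemma case_a:
  assumes len: "length is \<le> l" and t: "0 < t" "t < 1"
    and lt: "real (CARD('n) + length is) < \<alpha>"
  shows "\<bar>Dk is (\<lambda>x. Gbeta G w \<beta> t x y) x\<bar> \<le> (A1 * Mlow (\<beta> * (real CARD('n) / \<alpha>)) + E0 A2) *
     t powr (- real (CARD('n) + length is) * \<beta> / \<alpha>)"
proof -
  have c: "CARD('n) \<ge> 1" using zero_less_card_finite[where 'a='n] by linarith
  have "CARD('n) + length is < 2" using lt al by linarith
  then have k0: "length is = 0" using c by linarith
  then have is0: "is = []" by simp
  define p where "p = real (CARD('n) + length is) / \<alpha>"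
  have c': "real CARD('n) \<ge> 1" using c by simp
  have "0 < real (CARD('n) + length is)" by (simp add: add_pos_nonneg)
  then have p0: "0 < p" unfolding p_def using al by (intro divide_pos_pos) auto
  have p1: "p < 1" unfolding p_def using lt al by (simp add: divide_less_eq)
  note p = p0 p1
  define T where "T = (t powr \<beta>) powr (- p)"
  have T: "T \<ge> 1" unfolding T_def using T_ge1[OF t] p by simp
  have q: "0 < \<beta> * p" "\<beta> * p < \<beta>" using p b0 by auto
  have H: "\<bar>Dk is (\<lambda>x. G (sig t u) x y) x\<bar> \<le> A1 * T * u powr (\<beta> * p) + exp (A2 * u powr (- \<beta>))"
    if u: "u > 0" for u
    using PB_a[OF len t u p_def] unfolding T_def .
  have "\<bar>Dk is (\<lambda>x. Gbeta G w \<beta> t x y) x\<bar> = \<bar>EW w (\<lambda>u. Dk is (\<lambda>x. G (sig t u) x y) x)\<bar>"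
    using REP[OF len t] is0 by simp
  also have "\<dots> \<le> T * (A1 * Mlow (\<beta> * p) + E0 A2)" by (rule bound_B2[OF A q T H])
  also have "T = t powr (- real (CARD('n) + length is) * \<beta> / \<alpha>)"
    unfolding T_def p_def by (rule tpow[OF t(1), symmetric])
  also have "\<beta> * p = \<beta> * (real CARD('n) / \<alpha>)" unfolding p_def using k0 by simp
  finally show ?thesis by (simp add: mult.commute)
qed



lemma bc_common:
  assumes len: "length is \<le> l" and t: "0 < t" "t < 1" and xy: "x \<noteq> y"
    and \<rho>_def: "\<rho> = norm (x - y)" and \<Omega>_def: "\<Omega> = \<rho> powr \<alpha> * t powr (- \<beta>)"
    and O: "\<Omega> \<le> 1" and a_def: "a = \<Omega> powr (- 1 / \<beta>)"
    and p_def: "p = real (CARD('n) + length is) / \<alpha>"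
    and IT: "IW w (\<lambda>u. u powr (\<beta> * p) * indicator {..<a} u)"
  shows "a \<ge> 1" "\<Omega> > 0"
    "\<bar>Dk is (\<lambda>x. Gbeta G w \<beta> t x y) x\<bar> \<le>
       A1 * t powr \<beta> * \<rho> powr (- real (CARD('n) + length is) - \<alpha>) * (c0 * \<Omega>\<^sup>2)
       + A1 * (t powr \<beta>) powr (- p) * EW w (\<lambda>u. u powr (\<beta> * p) * indicator {..<a} u) + E0 A2"
proof -
  have r0: "\<rho> > 0" using xy \<rho>_def by simp
  show O0: "\<Omega> > 0" unfolding \<Omega>_def using r0 t by simp
  have P1: "\<Omega> powr (1/\<beta>) \<le> 1" using pw_le1[of "1/\<beta>" \<Omega>] O O0 b0 by simp
  have P0: "\<Omega> powr (1/\<beta>) > 0" using O0 by simp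
  have aP: "a * \<Omega> powr (1/\<beta>) = 1" unfolding a_def using O0 by (simp add: powr_add[symmetric])
  then have "a = 1 / \<Omega> powr (1/\<beta>)" using P0 by (simp add: eq_divide_eq)
  then show a1: "a \<ge> 1" using P0 P1 by (simp add: le_divide_eq_1)
  have a0: "a > 0" using a1 by simp
  have tp: "t powr \<beta> > 0" "t powr \<beta> < 1" using tau[OF t] by auto
  have aO: "a powr (- \<beta>) = \<Omega>" unfolding a_def using O0 b0 by (simp add: powr_powr)
  have a2: "a powr (- 2 * \<beta>) = \<Omega>\<^sup>2" unfolding a_def using O0 b0 by (simp add: powr_powr powr_realpow)
  have rt: "\<rho> powr \<alpha> = t powr \<beta> * \<Omega>" unfolding \<Omega>_def using t by (simp add: powr_minus_divide)
  define M1 where "M1 = A1 * t powr \<beta> * \<rho> powr (- real (CARD('n) + length is) - \<alpha>)"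
  define M2 where "M2 = A1 * (t powr \<beta>) powr (- p)"
  have M: "M1 \<ge> 0" "M2 \<ge> 0" unfolding M1_def M2_def using A by auto
  have q: "0 < \<beta> * p" unfolding p_def using b0 al by (simp add: add_pos_nonneg)
  have H: "\<bar>Dk is (\<lambda>x. G (sig t u) x y) x\<bar> \<le> M1 * (u powr (- \<beta>) * indicator {a..} u)
       + M2 * (u powr (\<beta> * p) * indicator {..<a} u) + exp (A2 * u powr (- \<beta>))" if u: "u > 0" for u
  proof (cases "a \<le> u")
    case True
    have sp: "sig t u > 0" using sig_pos t u by simp
    have "sig t u \<le> t powr \<beta> * a powr (- \<beta>)" unfolding sig_def using True a0 b0 tp
      by (intro mult_left_mono powr_mono2') auto
    also have "\<dots> = \<rho> powr \<alpha>" using aO rt by simp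
    also have "\<dots> \<le> t powr \<beta>" using O tp rt by (simp add: mult_le_cancel_left1)
    finally have s1: "sig t u < 1" using tp by simp
    have "\<bar>Dk is (\<lambda>x. G (sig t u) x y) x\<bar> \<le> A1 * sig t u * norm (x - y) powr (- real (CARD('n) + length is) - \<alpha>)"
      using Bb[OF len sp xy] s1 by simp
    also have "\<dots> = M1 * (u powr (- \<beta>) * indicator {a..} u)"
      unfolding M1_def sig_def \<rho>_def using True by (simp add: algebra_simps)
    finally have f1: "\<bar>Dk is (\<lambda>x. G (sig t u) x y) x\<bar> \<le> M1 * (u powr (- \<beta>) * indicator {a..} u)" .
    have z: "M2 * (u powr (\<beta> * p) * indicator {..<a} u) = 0" using True by simp
    have e: "0 < exp (A2 * u powr (- \<beta>))" by simp
    show ?thesis using f1 z e by linarith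
  next
    case False
    have "\<bar>Dk is (\<lambda>x. G (sig t u) x y) x\<bar> \<le> A1 * (t powr \<beta>) powr (- p) * u powr (\<beta> * p) + exp (A2 * u powr (- \<beta>))"
      by (rule PB_a[OF len t u p_def])
    then show ?thesis using False unfolding M2_def by (simp add: indicator_def)
  qed
  have "\<bar>Dk is (\<lambda>x. Gbeta G w \<beta> t x y) x\<bar> = \<bar>EW w (\<lambda>u. Dk is (\<lambda>x. G (sig t u) x y) x)\<bar>"
    using REP[OF len t] xy by simp
  also have "\<dots> \<le> M1 * (c0 * a powr (- 2 * \<beta>)) + M2 * EW w (\<lambda>u. u powr (\<beta> * p) * indicator {..<a} u) + E0 A2"
    by (rule bound_B3[OF A(2) M q a1 H IT])
  finally show "\<bar>Dk is (\<lambda>x. Gbeta G w \<beta> t x y) x\<bar> \<le>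
       A1 * t powr \<beta> * \<rho> powr (- real (CARD('n) + length is) - \<alpha>) * (c0 * \<Omega>\<^sup>2)
       + A1 * (t powr \<beta>) powr (- p) * EW w (\<lambda>u. u powr (\<beta> * p) * indicator {..<a} u) + E0 A2"
    unfolding a2 M1_def M2_def .
qed


lemma a_ge1: assumes O0: "\<Omega> > 0" and O: "\<Omega> \<le> 1" shows "\<Omega> powr (- 1 / \<beta>) \<ge> 1"
proof -
  have P1: "\<Omega> powr (1/\<beta>) \<le> 1" using pw_le1[of "1/\<beta>" \<Omega>] O O0 b0 by simp
  have P0: "\<Omega> powr (1/\<beta>) > 0" using O0 by simp
  have aP: "\<Omega> powr (- 1 / \<beta>) * \<Omega> powr (1/\<beta>) = 1" using O0 by (simp add: powr_add[symmetric])
  then have "\<Omega> powr (- 1 / \<beta>) = 1 / \<Omega> powr (1/\<beta>)" using P0 by (simp add: eq_divide_eq)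
  then show ?thesis using P0 P1 by (simp add: le_divide_eq_1)
qed

lemma Ke_nn: "Ke \<ge> 0" unfolding Ke_def using c0_pos by (simp add: add_nonneg_nonneg)
lemma E0_nn: "E0 A \<ge> 0" unfolding E0_def by (rule EW_nonneg) simp

lemma case_c:
  assumes len: "length is \<le> l" and t: "0 < t" "t < 1" and xy: "x \<noteq> y"
    and \<Omega>_def: "\<Omega> = norm (x - y) powr \<alpha> * t powr (- \<beta>)"
    and O: "\<Omega> \<le> 1" and gt: "real (CARD('n) + length is) > \<alpha>"
  shows "\<bar>Dk is (\<lambda>x. Gbeta G w \<beta> t x y) x\<bar> \<le>
    (A1 * c0 + A1 * Kp (\<beta> * (real (CARD('n) + length is) / \<alpha>)) + E0 A2) *
    (t powr (- real (CARD('n) + length is) * \<beta> / \<alpha>) * \<Omega> powr (1 - real (CARD('n) + length is) / \<alpha>))"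
proof -
  define \<rho> where "\<rho> = norm (x - y)"
  have r0: "\<rho> > 0" using xy \<rho>_def by simp
  define p where "p = real (CARD('n) + length is) / \<alpha>"
  have p1: "p > 1" unfolding p_def using gt al by (simp add: less_divide_eq)
  define a where "a = \<Omega> powr (- 1 / \<beta>)"
  have O0: "\<Omega> > 0" unfolding \<Omega>_def using r0 t \<rho>_def by simp
  have a1: "a \<ge> 1" unfolding a_def by (rule a_ge1[OF O0 O])
  have qb: "\<beta> < \<beta> * p" using p1 b0 by simp
  have IT: "IW w (\<lambda>u. u powr (\<beta> * p) * indicator {..<a} u)" by (rule truncmom_pos(1)[OF qb a1])
  have main: "\<bar>Dk is (\<lambda>x. Gbeta G w \<beta> t x y) x\<bar> \<le>
       A1 * t powr \<beta> * \<rho> powr (- real (CARD('n) + length is) - \<alpha>) * (c0 * \<Omega>\<^sup>2)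
       + A1 * (t powr \<beta>) powr (- p) * EW w (\<lambda>u. u powr (\<beta> * p) * indicator {..<a} u) + E0 A2"
    by (rule bc_common(3)[OF len t xy \<rho>_def \<Omega>_def[folded \<rho>_def] O a_def p_def IT])
  define T where "T = (t powr \<beta>) powr (- p) * \<Omega> powr (1 - p)"
  have tp: "t powr \<beta> > 0" using t by simp
  have e: "- 1 / \<beta> * (\<beta> * p - \<beta>) = 1 - p" using b0 by (simp add: field_simps)
  have aq: "a powr (\<beta> * p - \<beta>) = \<Omega> powr (1 - p)" unfolding a_def powr_powr e ..
  have T1: "t powr \<beta> * \<rho> powr (- real (CARD('n) + length is) - \<alpha>) * \<Omega>\<^sup>2 = T"
  proof -
    have "\<Omega>\<^sup>2 = \<Omega> powr 2" using O0 by (simp add: powr_numeral)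
    also have "\<dots> = \<rho> powr (\<alpha> * 2) * (t powr \<beta>) powr (- 2)"
      unfolding \<Omega>_def[folded \<rho>_def] by (rule Om_powr[OF r0 t(1)])
    finally have O2: "\<Omega>\<^sup>2 = \<rho> powr (\<alpha> * 2) * (t powr \<beta>) powr (- 2)" .
    have O1: "\<Omega> powr (1 - p) = \<rho> powr (\<alpha> * (1 - p)) * (t powr \<beta>) powr (- (1 - p))"
      unfolding \<Omega>_def[folded \<rho>_def] by (rule Om_powr[OF r0 t(1)])
    have e1: "- real (CARD('n) + length is) - \<alpha> + \<alpha> * 2 = \<alpha> * (1 - p)"
      unfolding p_def using al by (simp add: field_simps)
    have r: "\<rho> powr (- real (CARD('n) + length is) - \<alpha>) * \<rho> powr (\<alpha> * 2) = \<rho> powr (\<alpha> * (1 - p))"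
      by (simp only: powr_add[symmetric] e1)
    have tt: "t powr \<beta> * (t powr \<beta>) powr (- 2) = (t powr \<beta>) powr (- 1)"
    proof -
      have "t powr \<beta> * (t powr \<beta>) powr (- 2) = (t powr \<beta>) powr 1 * (t powr \<beta>) powr (- 2)"
        using tp by simp
      also have "\<dots> = (t powr \<beta>) powr (1 + - 2)" by (simp only: powr_add)
      also have "(t powr \<beta>) powr (1 + - 2) = (t powr \<beta>) powr (- 1)" by simp
      finally show ?thesis .
    qed
    have tt2: "(t powr \<beta>) powr (- p) * (t powr \<beta>) powr (- (1 - p)) = (t powr \<beta>) powr (- 1)"
      by (simp add: powr_add[symmetric])
    have "t powr \<beta> * \<rho> powr (- real (CARD('n) + length is) - \<alpha>) * \<Omega>\<^sup>2
       = (\<rho> powr (- real (CARD('n) + length is) - \<alpha>) * \<rho> powr (\<alpha> * 2)) * (t powr \<beta> * (t powr \<beta>) powr (- 2))"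
      unfolding O2 by (simp only: mult_ac)
    also have "\<dots> = \<rho> powr (\<alpha> * (1 - p)) * (t powr \<beta>) powr (- 1)" unfolding r tt ..
    also have "\<dots> = \<rho> powr (\<alpha> * (1 - p)) * ((t powr \<beta>) powr (- p) * (t powr \<beta>) powr (- (1 - p)))"
      unfolding tt2 ..
    also have "\<dots> = T" unfolding T_def O1 by (simp only: mult_ac)
    finally show ?thesis .
  qed
  have T_ge: "T \<ge> 1"
  proof -
    have "1 \<le> (t powr \<beta>) powr (- p)" using T_ge1[OF t] p1 by simp
    moreover have "\<Omega> powr 0 \<le> \<Omega> powr (1 - p)" using O O0 p1 by (intro powr_mono') auto
    ultimately have "1 * 1 \<le> (t powr \<beta>) powr (- p) * \<Omega> powr (1 - p)"
      using O0 by (intro mult_mono) auto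
    then show ?thesis unfolding T_def by simp
  qed
  have "A1 * (t powr \<beta>) powr (- p) * EW w (\<lambda>u. u powr (\<beta> * p) * indicator {..<a} u)
      \<le> A1 * (t powr \<beta>) powr (- p) * (Kp (\<beta> * p) * a powr (\<beta> * p - \<beta>))"
    using truncmom_pos(2)[OF qb a1] A by (intro mult_left_mono) auto
  also have "\<dots> = A1 * Kp (\<beta> * p) * T" unfolding aq T_def by (simp only: mult_ac)
  finally have t2: "A1 * (t powr \<beta>) powr (- p) * EW w (\<lambda>u. u powr (\<beta> * p) * indicator {..<a} u) \<le> A1 * Kp (\<beta> * p) * T" .
  have t1: "A1 * t powr \<beta> * \<rho> powr (- real (CARD('n) + length is) - \<alpha>) * (c0 * \<Omega>\<^sup>2) = A1 * c0 * T"
    using T1 by (simp only: mult_ac)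
  have t3: "E0 A2 \<le> E0 A2 * T" using T_ge E0_nn[of A2] by (simp add: mult_le_cancel_left1)
  have "\<bar>Dk is (\<lambda>x. Gbeta G w \<beta> t x y) x\<bar> \<le> (A1 * c0 + A1 * Kp (\<beta> * p) + E0 A2) * T"
  proof -
    have "(A1 * c0 + A1 * Kp (\<beta> * p) + E0 A2) * T = A1 * c0 * T + A1 * Kp (\<beta> * p) * T + E0 A2 * T"
      by (simp only: distrib_right)
    then show ?thesis using main t1 t2 t3 by linarith
  qed
  moreover have "T = t powr (- real (CARD('n) + length is) * \<beta> / \<alpha>) * \<Omega> powr (1 - real (CARD('n) + length is) / \<alpha>)"
    unfolding T_def p_def tpow[OF t(1)] ..
  ultimately show ?thesis unfolding p_def by simp
qed


lemma case_b:
  assumes len: "length is \<le> l" and t: "0 < t" "t < 1" and xy: "x \<noteq> y"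
    and \<Omega>_def: "\<Omega> = norm (x - y) powr \<alpha> * t powr (- \<beta>)"
    and O: "\<Omega> \<le> 1" and eq: "real (CARD('n) + length is) = \<alpha>"
  shows "\<bar>Dk is (\<lambda>x. Gbeta G w \<beta> t x y) x\<bar> \<le>
    (A1 * c0 + A1 * Ke / \<beta> + E0 A2) * (t powr (- \<beta>) * (\<bar>ln \<Omega>\<bar> + 1))"
proof -
  define \<rho> where "\<rho> = norm (x - y)"
  have r0: "\<rho> > 0" using xy \<rho>_def by simp
  define p where "p = real (CARD('n) + length is) / \<alpha>"
  have p1: "p = 1" unfolding p_def using eq al by simp
  define a where "a = \<Omega> powr (- 1 / \<beta>)"
  have O0: "\<Omega> > 0" unfolding \<Omega>_def using r0 t \<rho>_def by simp
  have a1: "a \<ge> 1" unfolding a_def by (rule a_ge1[OF O0 O])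
  have IT: "IW w (\<lambda>u. u powr (\<beta> * p) * indicator {..<a} u)" using truncmom_eq(1)[OF a1] p1 by simp
  have main: "\<bar>Dk is (\<lambda>x. Gbeta G w \<beta> t x y) x\<bar> \<le>
       A1 * t powr \<beta> * \<rho> powr (- real (CARD('n) + length is) - \<alpha>) * (c0 * \<Omega>\<^sup>2)
       + A1 * (t powr \<beta>) powr (- p) * EW w (\<lambda>u. u powr (\<beta> * p) * indicator {..<a} u) + E0 A2"
    by (rule bc_common(3)[OF len t xy \<rho>_def \<Omega>_def[folded \<rho>_def] O a_def p_def IT])
  have tp: "t powr \<beta> > 0" using t by simp
  define Ti where "Ti = (t powr \<beta>) powr (- 1)"
  have Ti1: "Ti \<ge> 1" unfolding Ti_def using T_ge1[OF t, of 1] by simp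
  have Ti_eq: "Ti = t powr (- \<beta>)" unfolding Ti_def by (simp add: powr_powr powr_minus_divide)
  have T1: "t powr \<beta> * \<rho> powr (- real (CARD('n) + length is) - \<alpha>) * \<Omega>\<^sup>2 = Ti"
  proof -
    have "\<Omega>\<^sup>2 = \<Omega> powr 2" using O0 by (simp add: powr_numeral)
    also have "\<dots> = \<rho> powr (\<alpha> * 2) * (t powr \<beta>) powr (- 2)"
      unfolding \<Omega>_def[folded \<rho>_def] by (rule Om_powr[OF r0 t(1)])
    finally have O2: "\<Omega>\<^sup>2 = \<rho> powr (\<alpha> * 2) * (t powr \<beta>) powr (- 2)" .
    have r: "\<rho> powr (- real (CARD('n) + length is) - \<alpha>) * \<rho> powr (\<alpha> * 2) = 1"
    proof -
      have "\<rho> powr (- real (CARD('n) + length is) - \<alpha>) * \<rho> powr (\<alpha> * 2) = \<rho> powr (- real (CARD('n) + length is) - \<alpha> + \<alpha> * 2)"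
        by (simp only: powr_add)
      also have "- real (CARD('n) + length is) - \<alpha> + \<alpha> * 2 = 0" using eq by simp
      finally show ?thesis using r0 by simp
    qed
    have tt: "t powr \<beta> * (t powr \<beta>) powr (- 2) = Ti"
    proof -
      have "t powr \<beta> * (t powr \<beta>) powr (- 2) = (t powr \<beta>) powr 1 * (t powr \<beta>) powr (- 2)"
        using tp by simp
      also have "\<dots> = (t powr \<beta>) powr (1 + - 2)" by (simp only: powr_add)
      also have "(t powr \<beta>) powr (1 + - 2) = Ti" unfolding Ti_def by simp
      finally show ?thesis .
    qed
    have "t powr \<beta> * \<rho> powr (- real (CARD('n) + length is) - \<alpha>) * \<Omega>\<^sup>2
       = (\<rho> powr (- real (CARD('n) + length is) - \<alpha>) * \<rho> powr (\<alpha> * 2)) * (t powr \<beta> * (t powr \<beta>) powr (- 2))"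
      unfolding O2 by (simp only: mult_ac)
    also have "\<dots> = Ti" unfolding r tt by simp
    finally show ?thesis .
  qed
  have la: "ln a = \<bar>ln \<Omega>\<bar> / \<beta>"
  proof -
    have "ln a = (- 1 / \<beta>) * ln \<Omega>" unfolding a_def using O0 by (simp add: ln_powr)
    moreover have "ln \<Omega> \<le> 0" using O O0 by simp
    ultimately show ?thesis by (simp add: abs_if field_simps)
  qed
  have lb: "1 + ln a \<le> (\<bar>ln \<Omega>\<bar> + 1) / \<beta>"
  proof -
    have "1 \<le> 1 / \<beta>" using b0 b1 by simp
    then have "1 + \<bar>ln \<Omega>\<bar> / \<beta> \<le> 1 / \<beta> + \<bar>ln \<Omega>\<bar> / \<beta>" by simp
    then show ?thesis unfolding la by (simp add: add_divide_distrib)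
  qed
  have t2: "A1 * (t powr \<beta>) powr (- p) * EW w (\<lambda>u. u powr (\<beta> * p) * indicator {..<a} u)
      \<le> A1 * Ke / \<beta> * (Ti * (\<bar>ln \<Omega>\<bar> + 1))"
  proof -
    have "A1 * (t powr \<beta>) powr (- p) * EW w (\<lambda>u. u powr (\<beta> * p) * indicator {..<a} u)
      = A1 * Ti * EW w (\<lambda>u. u powr \<beta> * indicator {..<a} u)" unfolding p1 Ti_def by simp
    also have "\<dots> \<le> A1 * Ti * (Ke * (1 + ln a))"
      using truncmom_eq(2)[OF a1] A Ti1 by (intro mult_left_mono) auto
    also have "\<dots> \<le> A1 * Ti * (Ke * ((\<bar>ln \<Omega>\<bar> + 1) / \<beta>))"
      using lb A Ti1 Ke_nn by (intro mult_left_mono) auto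
    also have "\<dots> = A1 * Ke / \<beta> * (Ti * (\<bar>ln \<Omega>\<bar> + 1))" by (simp add: field_simps)
    finally show ?thesis .
  qed
  have S1: "Ti \<le> Ti * (\<bar>ln \<Omega>\<bar> + 1)" using Ti1 by (simp add: mult_le_cancel_left1)
  have S2: "1 \<le> Ti * (\<bar>ln \<Omega>\<bar> + 1)" using Ti1 S1 by linarith
  have t1: "A1 * t powr \<beta> * \<rho> powr (- real (CARD('n) + length is) - \<alpha>) * (c0 * \<Omega>\<^sup>2) \<le> A1 * c0 * (Ti * (\<bar>ln \<Omega>\<bar> + 1))"
  proof -
    have "A1 * t powr \<beta> * \<rho> powr (- real (CARD('n) + length is) - \<alpha>) * (c0 * \<Omega>\<^sup>2) = A1 * c0 * Ti"
      using T1 by (simp only: mult_ac)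
    also have "\<dots> \<le> A1 * c0 * (Ti * (\<bar>ln \<Omega>\<bar> + 1))" using S1 A c0_pos by (intro mult_left_mono) auto
    finally show ?thesis .
  qed
  have t3: "E0 A2 \<le> E0 A2 * (Ti * (\<bar>ln \<Omega>\<bar> + 1))" using S2 E0_nn[of A2] by (simp add: mult_le_cancel_left1)
  have "(A1 * c0 + A1 * Ke / \<beta> + E0 A2) * (Ti * (\<bar>ln \<Omega>\<bar> + 1)) =
     A1 * c0 * (Ti * (\<bar>ln \<Omega>\<bar> + 1)) + A1 * Ke / \<beta> * (Ti * (\<bar>ln \<Omega>\<bar> + 1)) + E0 A2 * (Ti * (\<bar>ln \<Omega>\<bar> + 1))"
    by (simp only: distrib_right)
  then have "\<bar>Dk is (\<lambda>x. Gbeta G w \<beta> t x y) x\<bar> \<le> (A1 * c0 + A1 * Ke / \<beta> + E0 A2) * (Ti * (\<bar>ln \<Omega>\<bar> + 1))"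
    using main t1 t2 t3 by linarith
  then show ?thesis unfolding Ti_eq .
qed


lemma le_C: fixes D K T C :: real assumes "D \<le> K * T" "0 \<le> T" "\<bar>K\<bar> \<le> C" shows "D \<le> C * T"
proof -
  have "K * T \<le> \<bar>K\<bar> * T" using assms(2) by (intro mult_right_mono) auto
  also have "\<dots> \<le> C * T" using assms(2,3) by (intro mult_right_mono) auto
  finally show ?thesis using assms(1) by linarith
qed

lemma final_local:
  "\<exists>C>0. \<forall>is. length is \<le> l \<longrightarrow>
     (\<forall>t\<in>{0<..<1}. \<forall>x y.
        let k = length is;
            D = \<bar>Dk is (\<lambda>x. Gbeta G w \<beta> t x y) x\<bar>;
            \<Omega> = norm (x - y) powr \<alpha> * t powr (- \<beta>)
        in (\<Omega> \<le> 1 \<longrightarrow>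
              (real (CARD('n) + k) < \<alpha> \<longrightarrow> D \<le> C * t powr (- real (CARD('n) + k) * \<beta> / \<alpha>)) \<and>
              (real (CARD('n) + k) = \<alpha> \<and> x \<noteq> y \<longrightarrow> D \<le> C * t powr (- \<beta>) * (\<bar>ln \<Omega>\<bar> + 1)) \<and>
              (real (CARD('n) + k) > \<alpha> \<and> x \<noteq> y \<longrightarrow>
                 D \<le> C * t powr (- real (CARD('n) + k) * \<beta> / \<alpha>) * \<Omega> powr (1 - real (CARD('n) + k) / \<alpha>))) \<and>
           (1 \<le> \<Omega> \<and> \<Omega> \<le> t powr (- \<beta>) \<longrightarrow>
              D \<le> C * t powr (- real (CARD('n) + k) * \<beta> / \<alpha>) * \<Omega> powr (- 1 - real (CARD('n) + k) / \<alpha>)) \<and>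
           (\<Omega> \<ge> t powr (- \<beta>) \<longrightarrow>
              D \<le> C * t powr (- real CARD('n) * \<beta> / \<alpha>) * \<Omega> powr (- 1 - real CARD('n) / \<alpha>)))"
proof -
  define Ka where "Ka = A1 * Mlow (\<beta> * (real CARD('n) / \<alpha>)) + E0 A2"
  define Kb where "Kb = A1 * c0 + A1 * Ke / \<beta> + E0 A2"
  define Kc where "Kc k = A1 * c0 + A1 * Kp (\<beta> * (real (CARD('n) + k) / \<alpha>)) + E0 A2" for k :: nat
  define K3 where "K3 = A1 * E1 + E2 A2"
  define C where "C = 1 + \<bar>Ka\<bar> + \<bar>Kb\<bar> + \<bar>Kc 0\<bar> + \<bar>Kc 1\<bar> + \<bar>K3\<bar>"
  have C0: "C > 0" unfolding C_def by simp
  have Ca: "\<bar>Ka\<bar> \<le> C" and Cb: "\<bar>Kb\<bar> \<le> C" and C3: "\<bar>K3\<bar> \<le> C" unfolding C_def by auto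
  have Cc: "\<bar>Kc k\<bar> \<le> C" if "k \<le> 1" for k
  proof -
    have "k = 0 \<or> k = 1" using that by auto
    then show ?thesis unfolding C_def by auto
  qed
  show ?thesis
  proof (intro exI[of _ C] conjI C0 allI impI ballI)
    fix "is" :: "'n list" and t :: real and x y :: "real^'n"
    assume len: "length is \<le> l" and tt: "t \<in> {0<..<1}"
    have t: "0 < t" "t < 1" using tt by auto
    have kl: "length is \<le> 1" using len l1 by simp
    define \<Omega> where "\<Omega> = norm (x - y) powr \<alpha> * t powr (- \<beta>)"
    define D where "D = \<bar>Dk is (\<lambda>x. Gbeta G w \<beta> t x y) x\<bar>"
    have tn: "0 \<le> t powr r" for r by simp
    have On: "0 \<le> \<Omega> powr r" for r by simp
    have ia: "D \<le> C * t powr (- real (CARD('n) + length is) * \<beta> / \<alpha>)" if "real (CARD('n) + length is) < \<alpha>"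
      unfolding D_def using case_a[OF len t that] unfolding Ka_def[symmetric] by (rule le_C[OF _ tn Ca])
    have ib: "D \<le> C * t powr (- \<beta>) * (\<bar>ln \<Omega>\<bar> + 1)" if "\<Omega> \<le> 1" "real (CARD('n) + length is) = \<alpha>" "x \<noteq> y"
      using le_C[OF case_b[OF len t that(3) \<Omega>_def that(1) that(2), folded Kb_def D_def] _ Cb]
      by (simp add: mult.assoc)
    have ic: "D \<le> C * t powr (- real (CARD('n) + length is) * \<beta> / \<alpha>) * \<Omega> powr (1 - real (CARD('n) + length is) / \<alpha>)"
      if "\<Omega> \<le> 1" "real (CARD('n) + length is) > \<alpha>" "x \<noteq> y"
      using le_C[OF case_c[OF len t that(3) \<Omega>_def that(1) that(2), folded Kc_def D_def] _ Cc[OF kl]]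
      by (simp add: mult.assoc)
    have ii: "D \<le> C * t powr (- real (CARD('n) + length is) * \<beta> / \<alpha>) * \<Omega> powr (- 1 - real (CARD('n) + length is) / \<alpha>)"
      if "1 \<le> \<Omega>" "\<Omega> \<le> t powr (- \<beta>)"
      using le_C[OF case_ii[OF len t refl \<Omega>_def that, folded K3_def D_def] _ C3]
      by (simp add: mult.assoc)
    have iii: "D \<le> C * t powr (- real CARD('n) * \<beta> / \<alpha>) * \<Omega> powr (- 1 - real CARD('n) / \<alpha>)"
      if "t powr (- \<beta>) \<le> \<Omega>"
      using le_C[OF case_iii[OF len t refl \<Omega>_def that, folded K3_def D_def] _ C3]
      by (simp add: mult.assoc)
    show "let k = length is;
            D = \<bar>Dk is (\<lambda>x. Gbeta G w \<beta> t x y) x\<bar>;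
            \<Omega> = norm (x - y) powr \<alpha> * t powr (- \<beta>)
        in (\<Omega> \<le> 1 \<longrightarrow>
              (real (CARD('n) + k) < \<alpha> \<longrightarrow> D \<le> C * t powr (- real (CARD('n) + k) * \<beta> / \<alpha>)) \<and>
              (real (CARD('n) + k) = \<alpha> \<and> x \<noteq> y \<longrightarrow> D \<le> C * t powr (- \<beta>) * (\<bar>ln \<Omega>\<bar> + 1)) \<and>
              (real (CARD('n) + k) > \<alpha> \<and> x \<noteq> y \<longrightarrow>
                 D \<le> C * t powr (- real (CARD('n) + k) * \<beta> / \<alpha>) * \<Omega> powr (1 - real (CARD('n) + k) / \<alpha>))) \<and>
           (1 \<le> \<Omega> \<and> \<Omega> \<le> t powr (- \<beta>) \<longrightarrow>
              D \<le> C * t powr (- real (CARD('n) + k) * \<beta> / \<alpha>) * \<Omega> powr (- 1 - real (CARD('n) + k) / \<alpha>)) \<and>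
           (\<Omega> \<ge> t powr (- \<beta>) \<longrightarrow>
              D \<le> C * t powr (- real CARD('n) * \<beta> / \<alpha>) * \<Omega> powr (- 1 - real CARD('n) / \<alpha>))"
      unfolding Let_def D_def[symmetric] \<Omega>_def[symmetric] using ia ib ic ii iii by blast
  qed
qed

end

theorem mainTheorem9:
  fixes G :: "real \<Rightarrow> real^'n \<Rightarrow> real^'n \<Rightarrow> real"
    and w :: "real \<Rightarrow> real"
    and \<alpha> \<beta> :: real
  defines "d \<equiv> CARD('n)"
    and "l \<equiv> nat (\<lceil>\<alpha>\<rceil> - 1)"
  assumes alpha: "0 < \<alpha>" "\<alpha> < 2"
    and beta: "0 < \<beta>" "\<beta> < 1"
    and w: "stable_density \<beta> w"
    and G_cont: "continuous_on ({0<..} \<times> UNIV \<times> UNIV) (\<lambda>(s, x, y). G s x y)"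
    and G_diff: "l \<ge> 1 \<Longrightarrow> \<forall>s>0. \<forall>y x. (\<lambda>x. G s x y) differentiable (at x)"
    and G_diff_cont: "l \<ge> 1 \<Longrightarrow> \<forall>i. continuous_on ({0<..} \<times> UNIV \<times> UNIV)
                         (\<lambda>(s, x, y). pdiff i (\<lambda>x. G s x y) x)"
    and G_bound_loc: "\<forall>T0>0. \<exists>C. \<forall>is. length is \<le> l \<longrightarrow>
        (\<forall>s\<in>{0<..<T0}. \<forall>x y.
           \<bar>Dk is (\<lambda>x. G s x y) x\<bar> \<le> C * s powr (- real (d + length is) / \<alpha>) \<and>
           (x \<noteq> y \<longrightarrow> \<bar>Dk is (\<lambda>x. G s x y) x\<bar>
                \<le> C * s * norm (x - y) powr (- real (d + length is) - \<alpha>)))"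
    and G_bound_glob: "\<exists>C. \<forall>is. length is \<le> l \<longrightarrow>
        (\<forall>s>0. \<forall>x y.
           \<bar>Dk is (\<lambda>x. G s x y) x\<bar>
              \<le> exp (C * s) * max (s powr (- real (length is) / \<alpha>)) 1 * s powr (- real d / \<alpha>) \<and>
           (x \<noteq> y \<longrightarrow> \<bar>Dk is (\<lambda>x. G s x y) x\<bar>
              \<le> exp (C * s) * max (s powr (- real (length is) / \<alpha>)) 1
                 * (s * norm (x - y) powr (- real d - \<alpha>))))"
  shows "\<exists>C>0. \<forall>is. length is \<le> l \<longrightarrow>
     (\<forall>t\<in>{0<..<1}. \<forall>x y.
        let k = length is;
            D = \<bar>Dk is (\<lambda>x. Gbeta G w \<beta> t x y) x\<bar>;
            \<Omega> = norm (x - y) powr \<alpha> * t powr (- \<beta>)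
        in (\<Omega> \<le> 1 \<longrightarrow>
              (real (d + k) < \<alpha> \<longrightarrow> D \<le> C * t powr (- real (d + k) * \<beta> / \<alpha>)) \<and>
              (real (d + k) = \<alpha> \<and> x \<noteq> y \<longrightarrow> D \<le> C * t powr (- \<beta>) * (\<bar>ln \<Omega>\<bar> + 1)) \<and>
              (real (d + k) > \<alpha> \<and> x \<noteq> y \<longrightarrow>
                 D \<le> C * t powr (- real (d + k) * \<beta> / \<alpha>) * \<Omega> powr (1 - real (d + k) / \<alpha>))) \<and>
           (1 \<le> \<Omega> \<and> \<Omega> \<le> t powr (- \<beta>) \<longrightarrow>
              D \<le> C * t powr (- real (d + k) * \<beta> / \<alpha>) * \<Omega> powr (- 1 - real (d + k) / \<alpha>)) \<and>
           (\<Omega> \<ge> t powr (- \<beta>) \<longrightarrow>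
              D \<le> C * t powr (- real d * \<beta> / \<alpha>) * \<Omega> powr (- 1 - real d / \<alpha>)))"
proof -
  interpret sd \<beta> w using w beta by unfold_locales auto
  have l1: "l \<le> 1"
  proof -
    have "\<lceil>\<alpha>\<rceil> \<le> 2" using alpha by (simp add: ceiling_le_iff)
    then show ?thesis unfolding l_def by linarith
  qed
  obtain C1 where C1: "\<forall>is. length is \<le> l \<longrightarrow>
        (\<forall>s\<in>{0<..<1}. \<forall>x y.
           \<bar>Dk is (\<lambda>x. G s x y) x\<bar> \<le> C1 * s powr (- real (d + length is) / \<alpha>) \<and>
           (x \<noteq> y \<longrightarrow> \<bar>Dk is (\<lambda>x. G s x y) x\<bar>
                \<le> C1 * s * norm (x - y) powr (- real (d + length is) - \<alpha>)))"
    using G_bound_loc[rule_format, of 1] by auto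
  obtain C2 where C2: "\<forall>is. length is \<le> l \<longrightarrow>
        (\<forall>s>0. \<forall>x y.
           \<bar>Dk is (\<lambda>x. G s x y) x\<bar>
              \<le> exp (C2 * s) * max (s powr (- real (length is) / \<alpha>)) 1 * s powr (- real d / \<alpha>) \<and>
           (x \<noteq> y \<longrightarrow> \<bar>Dk is (\<lambda>x. G s x y) x\<bar>
              \<le> exp (C2 * s) * max (s powr (- real (length is) / \<alpha>)) 1
                 * (s * norm (x - y) powr (- real d - \<alpha>))))"
    using G_bound_glob by auto
  have ex: "exp (C2 * s) \<le> exp (\<bar>C2\<bar> * s)" if "s > 0" for s
    using that by (simp add: mult_right_mono)
  have mx: "max (s powr (- real k / \<alpha>)) 1 = 1" if "s \<ge> 1" for s :: real and k :: nat
  proof -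
    have "s powr (- real k / \<alpha>) \<le> 1" using that alpha by (simp add: powr_le_one_le ge_one_powr_ge_zero powr_minus_divide)
    then show ?thesis by simp
  qed
  have sd1: "s powr (- real d / \<alpha>) \<le> 1" if "s \<ge> 1" for s :: real
    using that alpha by (simp add: ge_one_powr_ge_zero powr_minus_divide)
  interpret g: gsetting \<beta> w G \<alpha> "\<bar>C1\<bar>" "\<bar>C2\<bar>" l
  proof unfold_locales
    show "0 < \<alpha>" "\<alpha> < 2" using alpha by auto
    show "l \<le> 1" by (rule l1)
    show "continuous_on ({0<..} \<times> UNIV \<times> UNIV) (\<lambda>(s, x, y). G s x y)" by (rule G_cont)
    show "l \<ge> 1 \<Longrightarrow> \<forall>s>0. \<forall>y x. (\<lambda>x. G s x y) differentiable (at x)" using G_diff by blast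
    show "l \<ge> 1 \<Longrightarrow> \<forall>i. continuous_on ({0<..} \<times> UNIV \<times> UNIV) (\<lambda>(s, x, y). pdiff i (\<lambda>x. G s x y) x)"
      using G_diff_cont by blast
    show "0 \<le> \<bar>C1\<bar>" "0 \<le> \<bar>C2\<bar>" by auto
  next
    fix "is" :: "'n list" and s :: real and z y :: "real^'n"
    assume len: "length is \<le> l" and s: "s > 0"
    show "\<bar>Dk is (\<lambda>x. G s x y) z\<bar> \<le>
        (if s < 1 then \<bar>C1\<bar> * s powr (- real (CARD('n) + length is) / \<alpha>) else exp (\<bar>C2\<bar> * s))"
    proof (cases "s < 1")
      case True
      then have "\<bar>Dk is (\<lambda>x. G s x y) z\<bar> \<le> C1 * s powr (- real (d + length is) / \<alpha>)"
        using C1 len s by auto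
      also have "\<dots> \<le> \<bar>C1\<bar> * s powr (- real (d + length is) / \<alpha>)" by (intro mult_right_mono) auto
      finally show ?thesis using True unfolding d_def by simp
    next
      case False
      then have s1: "s \<ge> 1" by simp
      have "\<bar>Dk is (\<lambda>x. G s x y) z\<bar> \<le> exp (C2 * s) * max (s powr (- real (length is) / \<alpha>)) 1 * s powr (- real d / \<alpha>)"
        using C2 len s by auto
      also have "\<dots> = exp (C2 * s) * s powr (- real d / \<alpha>)" using mx[OF s1] by simp
      also have "\<dots> \<le> exp (\<bar>C2\<bar> * s) * 1" using ex[OF s] sd1[OF s1] by (intro mult_mono) auto
      finally show ?thesis using False by simp
    qed
  next
    fix "is" :: "'n list" and s :: real and z y :: "real^'n"
    assume len: "length is \<le> l" and s: "s > 0" and zy: "z \<noteq> y"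
    show "\<bar>Dk is (\<lambda>x. G s x y) z\<bar> \<le>
        (if s < 1 then \<bar>C1\<bar> * s * norm (z - y) powr (- real (CARD('n) + length is) - \<alpha>)
         else exp (\<bar>C2\<bar> * s) * s * norm (z - y) powr (- real CARD('n) - \<alpha>))"
    proof (cases "s < 1")
      case True
      then have "\<bar>Dk is (\<lambda>x. G s x y) z\<bar> \<le> C1 * s * norm (z - y) powr (- real (d + length is) - \<alpha>)"
        using C1 len s zy by auto
      also have "\<dots> \<le> \<bar>C1\<bar> * s * norm (z - y) powr (- real (d + length is) - \<alpha>)"
        using s by (intro mult_right_mono) auto
      finally show ?thesis using True unfolding d_def by simp
    next
      case False
      then have s1: "s \<ge> 1" by simp
      have "\<bar>Dk is (\<lambda>x. G s x y) z\<bar> \<le> exp (C2 * s) * max (s powr (- real (length is) / \<alpha>)) 1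
                 * (s * norm (z - y) powr (- real d - \<alpha>))"
        using C2 len s zy by auto
      also have "\<dots> = exp (C2 * s) * (s * norm (z - y) powr (- real d - \<alpha>))" using mx[OF s1] by simp
      also have "\<dots> \<le> exp (\<bar>C2\<bar> * s) * (s * norm (z - y) powr (- real d - \<alpha>))"
        using ex[OF s] s by (intro mult_right_mono) auto
      finally show ?thesis using False unfolding d_def by (simp add: mult.assoc)
    qed
  qed
  show ?thesis using g.final_local unfolding d_def .
qed

end
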